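(* Let $n\ge 4$ and let $A=\{a_1,\dots,a_m\}$ with $1\le a_1<\dots<a_m\le n-1$. Then $QJ(n,A)$ is paired 2-coverable.
   Context: Let $[n]=\{1,\dots,n\}$. The Johnson graph $J(n,k)$ has as vertices the $k$-subsets of $[n]$, two being adjacent iff they share exactly $k-1$ elements. For a nonempty $A=\{a_1<a_2<\dots<a_m\}\subseteq[n]$, the graph $QJ(n,A)$ is formed by taking, for each $i$, a copy of $J(n,a_i)$ (called level $i$), and additionally joining a vertex $u$ of level $i$ to a vertex $v$ of level $i+1$ whenever $u\subseteq v$ (for $1\le i<m$); there are no other edges. A graph $G$ is \emph{paired 2-coverable} if for any four distinct vertices $u,v,x,y$ of $G$ there exist two vertex-disjoint paths $P$ and $Q$ in $G$ such that $P$ has endpoints $u$ and $v$, $Q$ has endpoints $x$ and $y$, and $V(P)\cup V(Q)=V(G)$. *)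

theory Defs
  imports Main
begin

definition is_path :: "'a set \<Rightarrow> ('a \<Rightarrow> 'a \<Rightarrow> bool) \<Rightarrow> 'a list \<Rightarrow> bool" where
  "is_path V E P \<longleftrightarrow> P \<noteq> [] \<and> distinct P \<and> set P \<subseteq> V \<and>
     (\<forall>i. Suc i < length P \<longrightarrow> E (P ! i) (P ! Suc i))"

definition paired_2_coverable :: "'a set \<Rightarrow> ('a \<Rightarrow> 'a \<Rightarrow> bool) \<Rightarrow> bool" where
  "paired_2_coverable V E \<longleftrightarrow>
     (\<forall>u\<in>V. \<forall>v\<in>V. \<forall>x\<in>V. \<forall>y\<in>V.
        distinct [u, v, x, y] \<longrightarrow>
        (\<exists>P Q. is_path V E P \<and> is_path V E Q \<and>
               hd P = u \<and> last P = v \<and> hd Q = x \<and> last Q = y \<and>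
               set P \<inter> set Q = {} \<and> set P \<union> set Q = V))"

definition QJ_verts :: "nat \<Rightarrow> nat set \<Rightarrow> nat set set" where
  "QJ_verts n A = {S. S \<subseteq> {1..n} \<and> card S \<in> A}"

definition consec :: "nat set \<Rightarrow> nat \<Rightarrow> nat \<Rightarrow> bool" where
  "consec A a b \<longleftrightarrow> a \<in> A \<and> b \<in> A \<and> a < b \<and> (\<forall>c\<in>A. \<not> (a < c \<and> c < b))"

definition QJ_adj :: "nat \<Rightarrow> nat set \<Rightarrow> nat set \<Rightarrow> nat set \<Rightarrow> bool" where
  "QJ_adj n A S T \<longleftrightarrow> S \<in> QJ_verts n A \<and> T \<in> QJ_verts n A \<and>
     ((card S = card T \<and> card (S \<inter> T) + 1 = card S) \<or>
      (S \<subseteq> T \<and> consec A (card S) (card T)) \<or>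
      (T \<subseteq> S \<and> consec A (card T) (card S)))"

end

theory Submission
  imports Defs
begin

lemma is_path_iff: "is_path V E P \<longleftrightarrow> P \<noteq> [] \<and> distinct P \<and> set P \<subseteq> V \<and> successively E P"
  by (simp add: is_path_def successively_conv_nth)

definition edge_in :: "'a set \<Rightarrow> 'a list \<Rightarrow> bool" where
  "edge_in W P \<longleftrightarrow> (\<exists>xs a b ys. P = xs @ a # b # ys \<and> a \<in> W \<and> b \<in> W)"

definition HCW :: "'a set \<Rightarrow> ('a \<Rightarrow> 'a \<Rightarrow> bool) \<Rightarrow> 'a set \<Rightarrow> bool" where
  "HCW V E W \<longleftrightarrow> (\<forall>s\<in>V. \<forall>t\<in>V. s \<noteq> t \<longrightarrow>
     (\<exists>P. is_path V E P \<and> hd P = s \<and> last P = t \<and> set P = V \<and> edge_in W P))"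

definition PC :: "'a set \<Rightarrow> ('a \<Rightarrow> 'a \<Rightarrow> bool) \<Rightarrow> 'a set \<Rightarrow> 'a \<Rightarrow> 'a \<Rightarrow> 'a \<Rightarrow> 'a \<Rightarrow> bool" where
  "PC V E W u v x y \<longleftrightarrow> (\<exists>P Q. is_path V E P \<and> is_path V E Q \<and>
     hd P = u \<and> last P = v \<and> hd Q = x \<and> last Q = y \<and>
     set P \<inter> set Q = {} \<and> set P \<union> set Q = V \<and> (edge_in W P \<or> edge_in W Q))"

definition P2CW :: "'a set \<Rightarrow> ('a \<Rightarrow> 'a \<Rightarrow> bool) \<Rightarrow> 'a set \<Rightarrow> bool" where
  "P2CW V E W \<longleftrightarrow> (\<forall>u\<in>V. \<forall>v\<in>V. \<forall>x\<in>V. \<forall>y\<in>V. distinct [u,v,x,y] \<longrightarrow> PC V E W u v x y)"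

definition Good where "Good V E W \<longleftrightarrow> HCW V E W \<and> P2CW V E W"

lemma P2CW_imp: "P2CW V E W \<Longrightarrow> paired_2_coverable V E"
  unfolding P2CW_def PC_def paired_2_coverable_def by blast

lemma is_path_mono: "is_path V E P \<Longrightarrow> V \<subseteq> V' \<Longrightarrow> is_path V' E P"
  by (auto simp: is_path_iff)

lemma is_path_append:
  assumes "is_path V E xs" "is_path V E ys" "set xs \<inter> set ys = {}" "E (last xs) (hd ys)"
  shows "is_path V E (xs @ ys)"
  using assms by (auto simp: is_path_iff successively_append_iff)

lemma is_path_rev:
  assumes "is_path V E P" "\<And>a b. E a b \<Longrightarrow> E b a"
  shows "is_path V E (rev P)"
proof -
  have "successively E P" using assms(1) by (simp add: is_path_iff)
  hence "successively (\<lambda>x y. E y x) P" by (rule successively_mono) (use assms(2) in blast)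
  thus ?thesis using assms(1) by (simp add: is_path_iff)
qed

lemma is_path_appendD1: "is_path V E (xs @ ys) \<Longrightarrow> xs \<noteq> [] \<Longrightarrow> is_path V E xs"
  by (auto simp: is_path_iff successively_append_iff)
lemma is_path_appendD2: "is_path V E (xs @ ys) \<Longrightarrow> ys \<noteq> [] \<Longrightarrow> is_path V E ys"
  by (auto simp: is_path_iff successively_append_iff)
lemma is_path_appendD3: "is_path V E (xs @ ys) \<Longrightarrow> xs \<noteq> [] \<Longrightarrow> ys \<noteq> [] \<Longrightarrow> E (last xs) (hd ys)"
  by (auto simp: is_path_iff successively_append_iff)

lemma is_path_single: "a \<in> V \<Longrightarrow> is_path V E [a]"
  by (simp add: is_path_iff)

lemma is_path_restrict: "is_path V E P \<Longrightarrow> set P \<subseteq> V' \<Longrightarrow> is_path V' E P"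
  by (auto simp: is_path_iff)

lemma edge_in_appendL: "edge_in W P \<Longrightarrow> edge_in W (xs @ P)"
  unfolding edge_in_def by (metis append.assoc)
lemma edge_in_appendR: "edge_in W P \<Longrightarrow> edge_in W (P @ ys)"
  unfolding edge_in_def by (metis append.assoc append_Cons)
lemma edge_in_mono: "edge_in W P \<Longrightarrow> W \<subseteq> W' \<Longrightarrow> edge_in W' P"
  unfolding edge_in_def by blast
lemma edge_in_rev: "edge_in W P \<Longrightarrow> edge_in W (rev P)"
  unfolding edge_in_def
proof (elim exE conjE)
  fix xs a b ys assume "P = xs @ a # b # ys" "a \<in> W" "b \<in> W"
  thus "\<exists>xs a b ys. rev P = xs @ a # b # ys \<and> a \<in> W \<and> b \<in> W"
    by (intro exI[of _ "rev ys"] exI[of _ b] exI[of _ a] exI[of _ "rev xs"]) simp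
qed

lemma edge_in_sub:
  assumes "set P \<subseteq> W" "2 \<le> length P"
  shows "edge_in W P"
proof -
  obtain a b ys where "P = a # b # ys"
    using assms(2) by (metis Suc_le_length_iff numeral_2_eq_2)
  thus ?thesis using assms(1) unfolding edge_in_def
    by (intro exI[of _ "[]"]) auto
qed

lemma len2: "P \<noteq> [] \<Longrightarrow> hd P \<noteq> last P \<Longrightarrow> 2 \<le> length P"
  by (cases P; cases "tl P") auto

lemma PC_revP:
  assumes "PC V E W u v x y" "\<And>a b. E a b \<Longrightarrow> E b a"
  shows "PC V E W v u x y"
proof -
  obtain P Q where *: "is_path V E P" "is_path V E Q" "hd P = u" "last P = v" "hd Q = x" "last Q = y"
    "set P \<inter> set Q = {}" "set P \<union> set Q = V" "edge_in W P \<or> edge_in W Q"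
    using assms(1) unfolding PC_def by blast
  have "P \<noteq> []" using *(1) by (simp add: is_path_iff)
  thus ?thesis unfolding PC_def using * is_path_rev[OF *(1) assms(2)] edge_in_rev
    by (intro exI[of _ "rev P"] exI[of _ Q]) (auto simp: hd_rev last_rev)
qed

lemma PC_swap: "PC V E W u v x y \<Longrightarrow> PC V E W x y u v"
  unfolding PC_def by blast

lemma PC_revQ: "PC V E W u v x y \<Longrightarrow> (\<And>a b. E a b \<Longrightarrow> E b a) \<Longrightarrow> PC V E W u v y x"
  by (meson PC_revP PC_swap)

lemma insert_path:
  assumes "is_path V E (xs @ a # b # ys)" "is_path V E H" "set H \<inter> set (xs @ a # b # ys) = {}"
    "E a (hd H)" "E (last H) b"
  shows "is_path V E (xs @ a # H @ b # ys)"
proof -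
  have H: "H \<noteq> []" using assms(2) by (simp add: is_path_iff)
  have p1: "is_path V E (xs @ [a])" using is_path_appendD1[of V E "xs @ [a]" "b # ys"] assms(1) by simp
  have p2: "is_path V E (b # ys)" using is_path_appendD2[of V E "xs @ [a]" "b # ys"] assms(1) by simp
  have d: "set (xs @ [a]) \<inter> set (b # ys) = {}" using assms(1) by (auto simp: is_path_iff)
  have "is_path V E (H @ b # ys)"
    by (rule is_path_append[OF assms(2) p2]) (use assms(3,5) in auto)
  hence "is_path V E ((xs @ [a]) @ (H @ b # ys))"
    by (rule is_path_append[OF p1]) (use assms(3,4) d H in auto)
  thus ?thesis by simp
qed

locale glue =
  fixes V0 V1 W :: "'a set" and E :: "'a \<Rightarrow> 'a \<Rightarrow> bool"
  assumes disj: "V0 \<inter> V1 = {}" and WV1: "W \<subseteq> V1"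
  and sym: "\<And>a b. E a b \<Longrightarrow> E b a"
  and G0h: "HCW V0 E V0" and G0p: "P2CW V0 E V0"
  and G1h: "HCW V1 E W" and G1p: "P2CW V1 E W"
  and fin: "finite V0" and card3: "card V0 \<ge> 3"
  and deg0: "\<And>a. a \<in> V0 \<Longrightarrow> \<exists>w1 w2. w1 \<in> W \<and> w2 \<in> W \<and> w1 \<noteq> w2 \<and> E a w1 \<and> E a w2"
  and deg1: "\<And>w. w \<in> W \<Longrightarrow> \<exists>a1 a2. a1 \<in> V0 \<and> a2 \<in> V0 \<and> a1 \<noteq> a2 \<and> E w a1 \<and> E w a2"
  and match: "\<And>e1 e2 f1 f2. \<exists>p q p' q'. p \<in> V0 \<and> q \<in> V0 \<and> p \<noteq> q \<and> p \<notin> {e1,e2} \<and> q \<notin> {e1,e2}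
     \<and> p' \<in> W \<and> q' \<in> W \<and> p' \<noteq> q' \<and> p' \<notin> {f1,f2} \<and> q' \<notin> {f1,f2} \<and> E p p' \<and> E q q'"
begin

abbreviation "VV \<equiv> V0 \<union> V1"

lemma hp0: "s \<in> V0 \<Longrightarrow> t \<in> V0 \<Longrightarrow> s \<noteq> t \<Longrightarrow> \<exists>H. is_path VV E H \<and> hd H = s \<and> last H = t \<and> set H = V0"
proof -
  assume a: "s \<in> V0" "t \<in> V0" "s \<noteq> t"
  then obtain H where "is_path V0 E H" "hd H = s" "last H = t" "set H = V0"
    using G0h unfolding HCW_def by blast
  thus ?thesis using is_path_mono[of V0 E H VV] by blast
qed

lemma hp1: "s \<in> V1 \<Longrightarrow> t \<in> V1 \<Longrightarrow> s \<noteq> t \<Longrightarrow> \<exists>H. is_path VV E H \<and> hd H = s \<and> last H = t \<and> set H = V1 \<and> edge_in W H"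
proof -
  assume a: "s \<in> V1" "t \<in> V1" "s \<noteq> t"
  then obtain H where "is_path V1 E H" "hd H = s" "last H = t" "set H = V1" "edge_in W H"
    using G1h unfolding HCW_def by blast
  thus ?thesis using is_path_mono[of V1 E H VV] by blast
qed

lemma pc0: "distinct [u,v,x,y] \<Longrightarrow> u \<in> V0 \<Longrightarrow> v \<in> V0 \<Longrightarrow> x \<in> V0 \<Longrightarrow> y \<in> V0 \<Longrightarrow>
  \<exists>P Q. is_path VV E P \<and> is_path VV E Q \<and> hd P = u \<and> last P = v \<and> hd Q = x \<and> last Q = y \<and>
     set P \<inter> set Q = {} \<and> set P \<union> set Q = V0"
proof -
  assume a: "distinct [u,v,x,y]" "u \<in> V0" "v \<in> V0" "x \<in> V0" "y \<in> V0"
  then obtain P Q where "is_path V0 E P" "is_path V0 E Q" "hd P = u" "last P = v" "hd Q = x" "last Q = y"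
     "set P \<inter> set Q = {}" "set P \<union> set Q = V0"
    using G0p unfolding P2CW_def PC_def by blast
  thus ?thesis using is_path_mono[of V0 E _ VV] by blast
qed

lemma pc1: "distinct [u,v,x,y] \<Longrightarrow> u \<in> V1 \<Longrightarrow> v \<in> V1 \<Longrightarrow> x \<in> V1 \<Longrightarrow> y \<in> V1 \<Longrightarrow>
  \<exists>P Q. is_path VV E P \<and> is_path VV E Q \<and> hd P = u \<and> last P = v \<and> hd Q = x \<and> last Q = y \<and>
     set P \<inter> set Q = {} \<and> set P \<union> set Q = V1 \<and> (edge_in W P \<or> edge_in W Q)"
proof -
  assume a: "distinct [u,v,x,y]" "u \<in> V1" "v \<in> V1" "x \<in> V1" "y \<in> V1"
  then obtain P Q where "is_path V1 E P" "is_path V1 E Q" "hd P = u" "last P = v" "hd Q = x" "last Q = y"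
     "set P \<inter> set Q = {}" "set P \<union> set Q = V1" "edge_in W P \<or> edge_in W Q"
    using G1p unfolding P2CW_def PC_def by blast
  thus ?thesis using is_path_mono[of V1 E _ VV] by blast
qed

lemma ins_V1:
  assumes "is_path VV E (a # b # ys)" "a \<in> V0" "b \<in> V0" "set (a # b # ys) \<inter> V1 = {}"
  shows "\<exists>K. set K = V1 \<and> is_path VV E (a # K @ b # ys)"
proof -
  obtain a' a'' where a: "a' \<in> W" "E a a'" using deg0[OF assms(2)] by blast
  obtain b' where b: "b' \<in> W" "E b b'" "b' \<noteq> a'" using deg0[OF assms(3)] by blast
  obtain K where K: "is_path VV E K" "hd K = a'" "last K = b'" "set K = V1"
    using hp1[of a' b'] a b WV1 by blast
  have "is_path VV E ([] @ a # K @ b # ys)"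
    by (rule insert_path) (use assms K a b sym[OF b(2)] in auto)
  thus ?thesis using K by auto
qed

lemma ins_V0:
  assumes "is_path VV E (xs @ a # b # ys)" "a \<in> W" "b \<in> W" "set (xs @ a # b # ys) \<inter> V0 = {}"
  shows "\<exists>H. set H = V0 \<and> 2 \<le> length H \<and> is_path VV E (xs @ a # H @ b # ys)"
proof -
  obtain a' where a: "a' \<in> V0" "E a a'" using deg1[OF assms(2)] by blast
  obtain b' where b: "b' \<in> V0" "E b b'" "b' \<noteq> a'" using deg1[OF assms(3)] by blast
  obtain H where H: "is_path VV E H" "hd H = a'" "last H = b'" "set H = V0"
    using hp0[of a' b'] a b by blast
  have "H \<noteq> []" using H by (simp add: is_path_iff)
  hence "2 \<le> length H" using len2[of H] H b(3) by simp
  moreover have "is_path VV E (xs @ a # H @ b # ys)"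
    by (rule insert_path) (use assms H a b sym[OF b(2)] in auto)
  ultimately show ?thesis using H by auto
qed

lemma edge0: "set H = V0 \<Longrightarrow> 2 \<le> length H \<Longrightarrow> edge_in V0 (xs @ a # H @ b # ys)"
proof -
  assume "set H = V0" "2 \<le> length H"
  hence "edge_in V0 H" by (intro edge_in_sub) auto
  hence "edge_in V0 ((xs @ [a]) @ (H @ (b # ys)))" by (intro edge_in_appendL edge_in_appendR)
  thus ?thesis by simp
qed


lemma hc00: assumes "s \<in> V0" "t \<in> V0" "s \<noteq> t"
  shows "\<exists>P. is_path VV E P \<and> hd P = s \<and> last P = t \<and> set P = VV \<and> edge_in V0 P"
proof -
  obtain H where H: "is_path VV E H" "hd H = s" "last H = t" "set H = V0" using hp0 assms by blast
  have "distinct H" using H by (simp add: is_path_iff)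
  hence "length H = card V0" using H(4) distinct_card by fastforce
  hence "length H \<ge> 3" using card3 by simp
  then obtain a b c zs where Hs: "H = a # b # c # zs"
    by (cases H; cases "tl H"; cases "tl (tl H)") auto
  have "set (a # b # c # zs) \<inter> V1 = {}" using H(4) Hs disj by auto
  moreover have "a \<in> V0" "b \<in> V0" "c \<in> V0" using H(4) Hs by auto
  ultimately obtain K where K: "set K = V1" "is_path VV E (a # K @ b # c # zs)"
    using ins_V1[of a b "c # zs"] H(1) Hs by auto
  have e: "edge_in V0 (a # K @ b # c # zs)" unfolding edge_in_def
    by (rule exI[of _ "a # K"]) (use \<open>b \<in> V0\<close> \<open>c \<in> V0\<close> in auto)
  show ?thesis
    by (rule exI[of _ "a # K @ b # c # zs"]) (use K e H Hs in auto)
qed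

lemma hc11: assumes "s \<in> V1" "t \<in> V1" "s \<noteq> t"
  shows "\<exists>P. is_path VV E P \<and> hd P = s \<and> last P = t \<and> set P = VV \<and> edge_in V0 P"
proof -
  obtain K where K: "is_path VV E K" "hd K = s" "last K = t" "set K = V1" "edge_in W K"
    using hp1 assms by blast
  then obtain xs a b ys where Ks: "K = xs @ a # b # ys" "a \<in> W" "b \<in> W" unfolding edge_in_def by blast
  have "set (xs @ a # b # ys) \<inter> V0 = {}" using K(4) Ks disj by auto
  then obtain H where H: "set H = V0" "2 \<le> length H" "is_path VV E (xs @ a # H @ b # ys)"
    using ins_V0[of xs a b ys] K(1) Ks by auto
  have "hd (xs @ a # H @ b # ys) = s" using K(2) Ks by (simp add: hd_append split: if_splits)
  moreover have "last (xs @ a # H @ b # ys) = t" using K(3) Ks by (simp add: last_append)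
  moreover have "set (xs @ a # H @ b # ys) = VV" using K(4) Ks H(1) by auto
  ultimately show ?thesis using H edge0 by blast
qed

lemma hc01: assumes "s \<in> V0" "t \<in> V1"
  shows "\<exists>P. is_path VV E P \<and> hd P = s \<and> last P = t \<and> set P = VV \<and> edge_in V0 P"
proof -
  obtain p q p' q' where m: "p \<in> V0" "p \<noteq> s" "p' \<in> W" "p' \<noteq> t" "E p p'"
    using match[of s s t t] by blast
  obtain H where H: "is_path VV E H" "hd H = s" "last H = p" "set H = V0" using hp0[of s p] assms m by blast
  obtain K where K: "is_path VV E K" "hd K = p'" "last K = t" "set K = V1"
    using hp1[of p' t] assms m WV1 by blast
  have "is_path VV E (H @ K)" by (rule is_path_append) (use H K m disj in auto)
  moreover have "H \<noteq> []" "K \<noteq> []" using H K by (auto simp: is_path_iff)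
  moreover have "edge_in V0 H" using H m len2[of H] \<open>H \<noteq> []\<close> by (intro edge_in_sub) auto
  ultimately show ?thesis using H K edge_in_appendR[of V0 H K] by (intro exI[of _ "H @ K"]) auto
qed

lemma hc: "HCW VV E V0"
  unfolding HCW_def
proof (intro ballI impI)
  fix s t assume st: "s \<in> VV" "t \<in> VV" "s \<noteq> t"
  show "\<exists>P. is_path VV E P \<and> hd P = s \<and> last P = t \<and> set P = VV \<and> edge_in V0 P"
  proof (cases "s \<in> V0")
    case True
    show ?thesis
    proof (cases "t \<in> V0")
      case True thus ?thesis using hc00 \<open>s \<in> V0\<close> st by blast
    next
      case False thus ?thesis using hc01 \<open>s \<in> V0\<close> st by blast
    qed
  next
    case False
    show ?thesis
    proof (cases "t \<in> V0")
      case True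
      then obtain P where P: "is_path VV E P" "hd P = t" "last P = s" "set P = VV" "edge_in V0 P"
        using hc01 False st by blast
      have "P \<noteq> []" using P by (simp add: is_path_iff)
      thus ?thesis using P is_path_rev[OF P(1) sym] edge_in_rev
        by (intro exI[of _ "rev P"]) (auto simp: hd_rev last_rev)
    next
      case False thus ?thesis using hc11 \<open>s \<notin> V0\<close> st by blast
    qed
  qed
qed


lemma fill0:
  assumes P: "is_path VV E P" and Q: "is_path VV E Q" and d: "set P \<inter> set Q = {}"
    and U: "set P \<union> set Q = V1" and e: "edge_in W P"
  shows "PC VV E V0 (hd P) (last P) (hd Q) (last Q)"
proof -
  obtain xs a b ys where Ps: "P = xs @ a # b # ys" "a \<in> W" "b \<in> W" using e unfolding edge_in_def by blast
  have "set (xs @ a # b # ys) \<inter> V0 = {}" using U Ps disj by auto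
  then obtain H where H: "set H = V0" "2 \<le> length H" "is_path VV E (xs @ a # H @ b # ys)"
    using ins_V0[of xs a b ys] P Ps by auto
  have "hd (xs @ a # H @ b # ys) = hd P" using Ps by (simp add: hd_append)
  moreover have "last (xs @ a # H @ b # ys) = last P" using Ps by (simp add: last_append)
  moreover have "set (xs @ a # H @ b # ys) = set P \<union> V0" using Ps H(1) by auto
  moreover have "edge_in V0 (xs @ a # H @ b # ys)" using edge0 H by blast
  ultimately show ?thesis unfolding PC_def using H(3) Q d U disj
    by (intro exI[of _ "xs @ a # H @ b # ys"] exI[of _ Q]) auto
qed

lemma c0000: assumes "distinct [u,v,x,y]" "u \<in> V1" "v \<in> V1" "x \<in> V1" "y \<in> V1"
  shows "PC VV E V0 u v x y"
proof -
  obtain P Q where *: "is_path VV E P" "is_path VV E Q" "hd P = u" "last P = v" "hd Q = x" "last Q = y"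
     "set P \<inter> set Q = {}" "set P \<union> set Q = V1" "edge_in W P \<or> edge_in W Q"
    using pc1[OF assms] by blast
  show ?thesis
  proof (cases "edge_in W P")
    case True thus ?thesis using fill0[OF *(1,2,7,8)] * by simp
  next
    case False
    hence "edge_in W Q" using * by blast
    hence "PC VV E V0 x y u v" using fill0[OF *(2,1) _ _ ] *(3-8) by (simp add: Int_commute Un_commute)
    thus ?thesis by (rule PC_swap)
  qed
qed

lemma c1111: assumes "distinct [u,v,x,y]" "u \<in> V0" "v \<in> V0" "x \<in> V0" "y \<in> V0"
  shows "PC VV E V0 u v x y"
proof -
  obtain P Q where *: "is_path VV E P" "is_path VV E Q" "hd P = u" "last P = v" "hd Q = x" "last Q = y"
     "set P \<inter> set Q = {}" "set P \<union> set Q = V0"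
    using pc0[OF assms] by blast
  have ne: "P \<noteq> []" "Q \<noteq> []" using * by (auto simp: is_path_iff)
  have "2 \<le> length P" "2 \<le> length Q" using len2 ne * assms(1) by auto
  then obtain a b ys where Ps: "P = a # b # ys" by (cases P; cases "tl P") auto
  have eQ: "edge_in V0 Q" using *(8) \<open>2 \<le> length Q\<close> by (intro edge_in_sub) auto
  have "set (a # b # ys) \<inter> V1 = {}" "a \<in> V0" "b \<in> V0" using *(8) Ps disj by auto
  then obtain K where K: "set K = V1" "is_path VV E (a # K @ b # ys)"
    using ins_V1[of a b ys] *(1) Ps by auto
  show ?thesis unfolding PC_def
    by (rule exI[of _ "a # K @ b # ys"], rule exI[of _ Q]) (use * K Ps eQ disj in auto)
qed

lemma c1110: assumes "distinct [u,v,x,y]" "u \<in> V0" "v \<in> V0" "x \<in> V0" "y \<in> V1"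
  shows "PC VV E V0 u v x y"
proof -
  obtain p q p' q' where m: "p \<in> V0" "q \<in> V0" "p \<noteq> q" "p \<notin> {u,v}" "q \<notin> {u,v}"
     "p' \<in> W" "q' \<in> W" "p' \<noteq> y" "q' \<noteq> y" "E p p'" "E q q'"
    using match[of u v y y] by blast
  obtain w w' where w: "w \<in> V0" "w \<notin> {u,v,x}" "w' \<in> W" "w' \<noteq> y" "E w w'"
    using m by (cases "p = x") auto
  obtain P Q where *: "is_path VV E P" "is_path VV E Q" "hd P = u" "last P = v" "hd Q = x" "last Q = w"
     "set P \<inter> set Q = {}" "set P \<union> set Q = V0"
    using pc0[of u v x w] assms w by auto
  obtain K where K: "is_path VV E K" "hd K = w'" "last K = y" "set K = V1"
    using hp1[of w' y] assms w WV1 by blast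
  have ne: "P \<noteq> []" "Q \<noteq> []" "K \<noteq> []" using * K by (auto simp: is_path_iff)
  have "2 \<le> length P" using len2 ne * assms(1) by auto
  hence eP: "edge_in V0 P" using *(8) by (intro edge_in_sub) auto
  have QK: "is_path VV E (Q @ K)" by (rule is_path_append) (use * K w disj in auto)
  show ?thesis unfolding PC_def
    by (rule exI[of _ P], rule exI[of _ "Q @ K"]) (use * K QK ne eP disj in auto)
qed

lemma c1000: assumes "distinct [u,v,x,y]" "u \<in> V0" "v \<in> V1" "x \<in> V1" "y \<in> V1"
  shows "PC VV E V0 u v x y"
proof -
  obtain p q p' q' where m: "p \<in> V0" "q \<in> V0" "p \<noteq> u" "q \<noteq> u"
     "p' \<in> W" "q' \<in> W" "p' \<noteq> q'" "p' \<notin> {v,x}" "q' \<notin> {v,x}" "E p p'" "E q q'"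
    using match[of u u v x] by blast
  obtain w w' where w: "w \<in> V0" "w \<noteq> u" "w' \<in> W" "w' \<notin> {v,x,y}" "E w w'"
    using m by (cases "p' = y") auto
  obtain H where H: "is_path VV E H" "hd H = u" "last H = w" "set H = V0"
    using hp0[of u w] assms w by blast
  obtain P Q where *: "is_path VV E P" "is_path VV E Q" "hd P = w'" "last P = v" "hd Q = x" "last Q = y"
     "set P \<inter> set Q = {}" "set P \<union> set Q = V1"
    using pc1[of w' v x y] assms w WV1 by auto
  have ne: "P \<noteq> []" "Q \<noteq> []" "H \<noteq> []" using * H by (auto simp: is_path_iff)
  have "2 \<le> length H" using len2[of H] ne H w by auto
  hence eH: "edge_in V0 (H @ P)" using H(4) by (intro edge_in_appendR edge_in_sub) auto
  have HP: "is_path VV E (H @ P)" by (rule is_path_append) (use * H w disj in auto)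
  show ?thesis unfolding PC_def
    by (rule exI[of _ "H @ P"], rule exI[of _ Q]) (use * H HP ne eH disj in auto)
qed

lemma c1100: assumes "distinct [u,v,x,y]" "u \<in> V0" "v \<in> V0" "x \<in> V1" "y \<in> V1"
  shows "PC VV E V0 u v x y"
proof -
  obtain H where H: "is_path VV E H" "hd H = u" "last H = v" "set H = V0"
    using hp0[of u v] assms by auto
  obtain K where K: "is_path VV E K" "hd K = x" "last K = y" "set K = V1"
    using hp1[of x y] assms by auto
  have "H \<noteq> []" using H by (auto simp: is_path_iff)
  hence "2 \<le> length H" using len2 H assms(1) by auto
  hence eH: "edge_in V0 H" using H(4) by (intro edge_in_sub) auto
  show ?thesis unfolding PC_def
    by (rule exI[of _ H], rule exI[of _ K]) (use H K eH disj in auto)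
qed

lemma c1010: assumes "distinct [u,v,x,y]" "u \<in> V0" "v \<in> V1" "x \<in> V0" "y \<in> V1"
  shows "PC VV E V0 u v x y"
proof -
  obtain p q p' q' where m: "p \<in> V0" "q \<in> V0" "p \<noteq> q" "p \<notin> {u,x}" "q \<notin> {u,x}"
     "p' \<in> W" "q' \<in> W" "p' \<noteq> q'" "p' \<notin> {v,y}" "q' \<notin> {v,y}" "E p p'" "E q q'"
    using match[of u x v y] by blast
  obtain P1 Q1 where A: "is_path VV E P1" "is_path VV E Q1" "hd P1 = u" "last P1 = p" "hd Q1 = x" "last Q1 = q"
     "set P1 \<inter> set Q1 = {}" "set P1 \<union> set Q1 = V0"
    using pc0[of u p x q] assms m by auto
  obtain P2 Q2 where B: "is_path VV E P2" "is_path VV E Q2" "hd P2 = p'" "last P2 = v" "hd Q2 = q'" "last Q2 = y"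
     "set P2 \<inter> set Q2 = {}" "set P2 \<union> set Q2 = V1"
    using pc1[of p' v q' y] assms m WV1 by auto
  have ne: "P1 \<noteq> []" "Q1 \<noteq> []" "P2 \<noteq> []" "Q2 \<noteq> []" using A B by (auto simp: is_path_iff)
  have "2 \<le> length P1" using len2[of P1] ne A m by auto
  hence eP: "edge_in V0 (P1 @ P2)" using A(8) by (intro edge_in_appendR edge_in_sub) auto
  have P: "is_path VV E (P1 @ P2)" by (rule is_path_append) (use A B m disj in auto)
  have Q: "is_path VV E (Q1 @ Q2)" by (rule is_path_append) (use A B m disj in auto)
  show ?thesis unfolding PC_def
    by (rule exI[of _ "P1 @ P2"], rule exI[of _ "Q1 @ Q2"]) (use A B P Q ne eP disj in auto)
qed


lemma p2c: "P2CW VV E V0"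
  unfolding P2CW_def
proof (intro ballI impI)
  fix u v x y assume m: "u \<in> VV" "v \<in> VV" "x \<in> VV" "y \<in> VV" and d: "distinct [u,v,x,y]"
  have d2: "distinct [u,v,y,x]" "distinct [v,u,x,y]" "distinct [x,y,u,v]" "distinct [v,u,y,x]"
    "distinct [y,x,u,v]" "distinct [x,y,v,u]" using d by auto
  note rP = PC_revP[OF _ sym] and rQ = PC_revQ[OF _ sym] and sw = PC_swap
  show "PC VV E V0 u v x y"
  proof (cases "u \<in> V0"; cases "v \<in> V0"; cases "x \<in> V0"; cases "y \<in> V0")
    assume "u \<in> V0" "v \<in> V0" "x \<in> V0" "y \<in> V0" thus ?thesis using c1111 d by blast
  next
    assume "u \<in> V0" "v \<in> V0" "x \<in> V0" "y \<notin> V0" thus ?thesis using c1110 d m by blast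
  next
    assume "u \<in> V0" "v \<in> V0" "x \<notin> V0" "y \<in> V0" thus ?thesis using rQ[OF c1110[of u v y x]] d2 m by blast
  next
    assume "u \<in> V0" "v \<in> V0" "x \<notin> V0" "y \<notin> V0" thus ?thesis using c1100 d m by blast
  next
    assume "u \<in> V0" "v \<notin> V0" "x \<in> V0" "y \<in> V0" thus ?thesis using sw[OF c1110[of x y u v]] d2 m by blast
  next
    assume "u \<in> V0" "v \<notin> V0" "x \<in> V0" "y \<notin> V0" thus ?thesis using c1010 d m by blast
  next
    assume "u \<in> V0" "v \<notin> V0" "x \<notin> V0" "y \<in> V0" thus ?thesis using rQ[OF c1010[of u v y x]] d2 m by blast
  next
    assume "u \<in> V0" "v \<notin> V0" "x \<notin> V0" "y \<notin> V0" thus ?thesis using c1000 d m by blast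
  next
    assume "u \<notin> V0" "v \<in> V0" "x \<in> V0" "y \<in> V0" thus ?thesis using rP[OF sw[OF c1110[of x y v u]]] d2 m by blast
  next
    assume "u \<notin> V0" "v \<in> V0" "x \<in> V0" "y \<notin> V0" thus ?thesis using rP[OF c1010[of v u x y]] d2 m by blast
  next
    assume "u \<notin> V0" "v \<in> V0" "x \<notin> V0" "y \<in> V0" thus ?thesis using rP[OF rQ[OF c1010[of v u y x]]] d2 m by blast
  next
    assume "u \<notin> V0" "v \<in> V0" "x \<notin> V0" "y \<notin> V0" thus ?thesis using rP[OF c1000[of v u x y]] d2 m by blast
  next
    assume "u \<notin> V0" "v \<notin> V0" "x \<in> V0" "y \<in> V0" thus ?thesis using sw[OF c1100[of x y u v]] d2 m by blast
  next
    assume "u \<notin> V0" "v \<notin> V0" "x \<in> V0" "y \<notin> V0" thus ?thesis using sw[OF c1000[of x y u v]] d2 m by blast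
  next
    assume "u \<notin> V0" "v \<notin> V0" "x \<notin> V0" "y \<in> V0" thus ?thesis using rQ[OF sw[OF c1000[of y x u v]]] d2 m by blast
  next
    assume "u \<notin> V0" "v \<notin> V0" "x \<notin> V0" "y \<notin> V0" thus ?thesis using c0000 d m by blast
  qed
qed

lemma good: "Good VV E V0"
  unfolding Good_def using hc p2c by blast

end

lemma glue_good:
  assumes "V0 \<inter> V1 = {}" "W \<subseteq> V1" "\<And>a b. E a b \<Longrightarrow> E b a"
  and "Good V0 E V0" "Good V1 E W" "finite V0" "card V0 \<ge> 3"
  and "\<And>a. a \<in> V0 \<Longrightarrow> \<exists>w1 w2. w1 \<in> W \<and> w2 \<in> W \<and> w1 \<noteq> w2 \<and> E a w1 \<and> E a w2"
  and "\<And>w. w \<in> W \<Longrightarrow> \<exists>a1 a2. a1 \<in> V0 \<and> a2 \<in> V0 \<and> a1 \<noteq> a2 \<and> E w a1 \<and> E w a2"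
  and "\<And>e1 e2 f1 f2. \<exists>p q p' q'. p \<in> V0 \<and> q \<in> V0 \<and> p \<noteq> q \<and> p \<notin> {e1,e2} \<and> q \<notin> {e1,e2}
     \<and> p' \<in> W \<and> q' \<in> W \<and> p' \<noteq> q' \<and> p' \<notin> {f1,f2} \<and> q' \<notin> {f1,f2} \<and> E p p' \<and> E q q'"
  shows "Good (V0 \<union> V1) E V0"
  using assms unfolding Good_def by (intro glue.good[unfolded Good_def]) (unfold_locales, auto)

lemma Good_cong:
  assumes "Good V E W" "\<And>a b. a \<in> V \<Longrightarrow> b \<in> V \<Longrightarrow> E a b = E' a b"
  shows "Good V E' W"
proof -
  have *: "is_path V E P = is_path V E' P" for P
  proof -
    have "set P \<subseteq> V \<Longrightarrow> successively E P = successively E' P"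
      by (rule successively_cong) (use assms(2) in auto)
    thus ?thesis by (auto simp: is_path_iff)
  qed
  show ?thesis using assms(1) unfolding Good_def HCW_def P2CW_def PC_def * .
qed

lemma Good_monoW: assumes "Good V E W" "W \<subseteq> W'" shows "Good V E W'"
proof -
  have e: "\<And>P. edge_in W P \<Longrightarrow> edge_in W' P" using edge_in_mono assms(2) by blast
  have "HCW V E W'" unfolding HCW_def
  proof (intro ballI impI)
    fix s t assume "s \<in> V" "t \<in> V" "s \<noteq> t"
    then obtain P where "is_path V E P \<and> hd P = s \<and> last P = t \<and> set P = V \<and> edge_in W P"
      using assms(1) unfolding Good_def HCW_def by blast
    thus "\<exists>P. is_path V E P \<and> hd P = s \<and> last P = t \<and> set P = V \<and> edge_in W' P" using e by blast
  qed
  moreover have "P2CW V E W'" unfolding P2CW_def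
  proof (intro ballI impI)
    fix u v x y assume "u \<in> V" "v \<in> V" "x \<in> V" "y \<in> V" "distinct [u,v,x,y]"
    hence "PC V E W u v x y" using assms(1) unfolding Good_def P2CW_def by blast
    thus "PC V E W' u v x y" unfolding PC_def using e by blast
  qed
  ultimately show ?thesis by (simp add: Good_def)
qed

lemma is_path_map:
  assumes "is_path V E P" "inj_on f V" "\<And>a b. a \<in> V \<Longrightarrow> b \<in> V \<Longrightarrow> E a b \<Longrightarrow> E' (f a) (f b)"
  shows "is_path (f ` V) E' (map f P)"
proof -
  have P: "P \<noteq> []" "distinct P" "set P \<subseteq> V" "successively E P" using assms(1) by (auto simp: is_path_iff)
  have "successively (\<lambda>x y. E' (f x) (f y)) P"
    by (rule successively_mono[OF P(4)]) (use P(3) assms(3) in blast)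
  moreover have "distinct (map f P)" using P(2,3) assms(2) by (simp add: distinct_map inj_on_subset)
  ultimately show ?thesis using P by (auto simp: is_path_iff successively_map)
qed

lemma edge_in_map: "edge_in W P \<Longrightarrow> edge_in (f ` W) (map f P)"
  unfolding edge_in_def
proof (elim exE conjE)
  fix xs a b ys assume "P = xs @ a # b # ys" "a \<in> W" "b \<in> W"
  thus "\<exists>xs a b ys. map f P = xs @ a # b # ys \<and> a \<in> f ` W \<and> b \<in> f ` W"
    by (intro exI[of _ "map f xs"] exI[of _ "f a"] exI[of _ "f b"] exI[of _ "map f ys"]) auto
qed

lemma Good_iso:
  assumes G: "Good V E W" and bij: "bij_betw f V V'"
    and adj: "\<And>a b. a \<in> V \<Longrightarrow> b \<in> V \<Longrightarrow> E' (f a) (f b) = E a b"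
  shows "Good V' E' (f ` W)"
proof -
  have inj: "inj_on f V" and im: "f ` V = V'" using bij by (auto simp: bij_betw_def)
  define g where "g = inv_into V f"
  have g1: "\<And>s. s \<in> V' \<Longrightarrow> g s \<in> V" unfolding g_def
    by (rule inv_into_into) (simp add: im)
  have g2: "\<And>s. s \<in> V' \<Longrightarrow> f (g s) = s" unfolding g_def
    by (rule f_inv_into_f) (simp add: im)
  have ginj: "\<And>s t. s \<in> V' \<Longrightarrow> t \<in> V' \<Longrightarrow> s \<noteq> t \<Longrightarrow> g s \<noteq> g t"
  proof
    fix s t assume "s \<in> V'" "t \<in> V'" "s \<noteq> t" "g s = g t"
    hence "f (g s) = f (g t)" by simp
    thus False using g2 \<open>s \<in> V'\<close> \<open>t \<in> V'\<close> \<open>s \<noteq> t\<close> by simp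
  qed
  have pm: "is_path V E P \<Longrightarrow> is_path V' E' (map f P)" for P
  proof -
    assume "is_path V E P"
    hence "is_path (f ` V) E' (map f P)" by (rule is_path_map[OF _ inj]) (simp add: adj)
    thus ?thesis using im by simp
  qed
  have HC: "HCW V' E' (f ` W)" unfolding HCW_def
  proof (intro ballI impI)
    fix s t assume st: "s \<in> V'" "t \<in> V'" "s \<noteq> t"
    have "g s \<in> V" "g t \<in> V" "g s \<noteq> g t" using st g1 ginj by auto
    then obtain P where P: "is_path V E P" "hd P = g s" "last P = g t" "set P = V" "edge_in W P"
      using G unfolding Good_def HCW_def by blast
    have ne: "P \<noteq> []" using P by (simp add: is_path_iff)
    have "is_path V' E' (map f P)" using pm P by blast
    moreover have "hd (map f P) = s" using ne P g2 st by (simp add: hd_map)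
    moreover have "last (map f P) = t" using ne P g2 st by (simp add: last_map)
    moreover have "set (map f P) = V'" using P im by simp
    moreover have "edge_in (f ` W) (map f P)" using P edge_in_map by blast
    ultimately show "\<exists>P. is_path V' E' P \<and> hd P = s \<and> last P = t \<and> set P = V' \<and> edge_in (f ` W) P"
      by blast
  qed
  have PCs: "P2CW V' E' (f ` W)" unfolding P2CW_def
  proof (intro ballI impI)
    fix u v x y assume m: "u \<in> V'" "v \<in> V'" "x \<in> V'" "y \<in> V'" and d: "distinct [u,v,x,y]"
    have "distinct [g u, g v, g x, g y]" using d m ginj by auto
    moreover have "g u \<in> V" "g v \<in> V" "g x \<in> V" "g y \<in> V" using g1 m by auto
    ultimately obtain P Q where *: "is_path V E P" "is_path V E Q" "hd P = g u" "last P = g v"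
      "hd Q = g x" "last Q = g y" "set P \<inter> set Q = {}" "set P \<union> set Q = V" "edge_in W P \<or> edge_in W Q"
      using G unfolding Good_def P2CW_def PC_def by blast
    have ne: "P \<noteq> []" "Q \<noteq> []" using * by (auto simp: is_path_iff)
    have sub: "set P \<subseteq> V" "set Q \<subseteq> V" using *(8) by auto
    have "set (map f P) \<inter> set (map f Q) = f ` (set P \<inter> set Q)"
      using inj_on_image_Int[OF inj sub] by simp
    hence d1: "set (map f P) \<inter> set (map f Q) = {}" using *(7) by simp
    have d2: "set (map f P) \<union> set (map f Q) = V'" using *(8) im by auto
    have "is_path V' E' (map f P)" "is_path V' E' (map f Q)" using pm * by blast+
    moreover have "hd (map f P) = u" "last (map f P) = v" "hd (map f Q) = x" "last (map f Q) = y"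
      using ne * g2 m by (simp_all add: hd_map last_map)
    moreover have "edge_in (f ` W) (map f P) \<or> edge_in (f ` W) (map f Q)" using *(9) edge_in_map by blast
    ultimately show "PC V' E' (f ` W) u v x y" unfolding PC_def using d1 d2 by blast
  qed
  show ?thesis using HC PCs by (simp add: Good_def)
qed

lemma distinct_succ: "distinct xs \<Longrightarrow> successively (\<noteq>) xs"
proof (induction xs)
  case (Cons a xs) thus ?case by (cases xs) auto
qed simp

lemma complete_path:
  assumes "\<forall>a\<in>V. \<forall>b\<in>V. a \<noteq> b \<longrightarrow> E a b" "P \<noteq> []" "distinct P" "set P \<subseteq> V"
  shows "is_path V E P"
proof -
  have "successively E P"
    by (rule successively_mono[OF distinct_succ[OF assms(3)]]) (use assms in blast)
  thus ?thesis using assms by (simp add: is_path_iff)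
qed

lemma complete_good:
  assumes fin: "finite V" and c: "\<And>a b. a \<in> V \<Longrightarrow> b \<in> V \<Longrightarrow> a \<noteq> b \<Longrightarrow> E a b"
  shows "Good V E V"
proof -
  have cc: "\<forall>a\<in>V. \<forall>b\<in>V. a \<noteq> b \<longrightarrow> E a b" using c by simp
  have HC: "HCW V E V" unfolding HCW_def
  proof (intro ballI impI)
    fix s t assume st: "s \<in> V" "t \<in> V" "s \<noteq> t"
    obtain xs where xs: "distinct xs" "set xs = V - {s,t}"
      using finite_distinct_list[of "V - {s,t}"] fin by auto
    let ?P = "s # xs @ [t]"
    have "distinct ?P" using xs st by auto
    hence "is_path V E ?P" using complete_path[OF cc, of ?P] xs st by auto
    moreover have "edge_in V ?P" using st xs by (intro edge_in_sub) auto
    moreover have "set ?P = V" using xs st by auto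
    moreover have "hd ?P = s" "last ?P = t" by simp_all
    ultimately show "\<exists>P. is_path V E P \<and> hd P = s \<and> last P = t \<and> set P = V \<and> edge_in V P"
      by blast
  qed
  have PCs: "P2CW V E V" unfolding P2CW_def
  proof (intro ballI impI)
    fix u v x y assume m: "u \<in> V" "v \<in> V" "x \<in> V" "y \<in> V" and d: "distinct [u,v,x,y]"
    obtain xs where xs: "distinct xs" "set xs = V - {u,v,x,y}"
      using finite_distinct_list[of "V - {u,v,x,y}"] fin by auto
    let ?P = "u # xs @ [v]" and ?Q = "[x,y]"
    have "distinct ?P" "distinct ?Q" using xs d by auto
    hence "is_path V E ?P" "is_path V E ?Q" using complete_path[OF cc, of ?P] complete_path[OF cc, of ?Q] xs m by auto
    moreover have "edge_in V ?Q" using m by (intro edge_in_sub) auto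
    moreover have "set ?P \<union> set ?Q = V" "set ?P \<inter> set ?Q = {}" using xs m d by auto
    moreover have "hd ?P = u" "last ?P = v" "hd ?Q = x" "last ?Q = y" by simp_all
    ultimately show "PC V E V u v x y" unfolding PC_def by blast
  qed
  show ?thesis using HC PCs by (simp add: Good_def)
qed

locale invol =
  fixes V :: "'a set" and E and \<sigma> :: "'a \<Rightarrow> 'a"
  assumes fin: "finite V" and c6: "card V = 6"
  and s1: "\<And>a. a \<in> V \<Longrightarrow> \<sigma> a \<in> V" and s2: "\<And>a. a \<in> V \<Longrightarrow> \<sigma> a \<noteq> a"
  and s3: "\<And>a. a \<in> V \<Longrightarrow> \<sigma> (\<sigma> a) = a"
  and adj: "\<And>a b. a \<in> V \<Longrightarrow> b \<in> V \<Longrightarrow> E a b \<longleftrightarrow> a \<noteq> b \<and> b \<noteq> \<sigma> a"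
begin

lemma sinj: "a \<in> V \<Longrightarrow> b \<in> V \<Longrightarrow> \<sigma> a = \<sigma> b \<Longrightarrow> a = b"
  by (metis s3)

lemma sflip: "a \<in> V \<Longrightarrow> b \<in> V \<Longrightarrow> \<sigma> a = b \<Longrightarrow> \<sigma> b = a"
  using s3 by blast

lemma two_left:
  assumes "distinct [u,v,x,y]" "u \<in> V" "v \<in> V" "x \<in> V" "y \<in> V"
  obtains r s where "r \<noteq> s" "V - {u,v,x,y} = {r,s}"
proof -
  have "card (V - {u,v,x,y}) = 2" using assms fin c6 by (simp add: card_Diff_subset)
  thus ?thesis using that card_2_iff by metis
qed

lemma pathI: "distinct P \<Longrightarrow> P \<noteq> [] \<Longrightarrow> set P \<subseteq> V \<Longrightarrow> successively E P \<Longrightarrow> is_path V E P"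
  by (simp add: is_path_iff)

lemma case_xy:
  assumes d: "distinct [u,v,x,y,r,s]" and m: "u \<in> V" "v \<in> V" "x \<in> V" "y \<in> V" "r \<in> V" "s \<in> V"
  and V: "V = {u,v,x,y,r,s}" and rs: "\<sigma> r \<noteq> s" and xy: "y \<noteq> \<sigma> x"
  shows "PC V E V u v x y"
proof -
  have Exy: "E x y" using adj[OF m(3,4)] d xy by simp
  have "r \<noteq> \<sigma> s" proof assume "r = \<sigma> s" hence "\<sigma> r = s" using s3[OF m(6)] by simp
    thus False using rs by simp qed
  hence Ers: "E r s" "E s r" using adj[OF m(5,6)] adj[OF m(6,5)] d rs by auto
  have Q: "is_path V E [x,y]" using Exy d m by (intro pathI) auto
  have eQ: "edge_in V [x,y]" using m by (intro edge_in_sub) auto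
  show ?thesis
  proof (cases "\<sigma> r \<noteq> u \<and> \<sigma> s \<noteq> v")
    case True
    have "r \<noteq> \<sigma> u" proof assume "r = \<sigma> u" hence "\<sigma> r = u" using s3[OF m(1)] by simp
      thus False using True by simp qed
    hence "E u r" "E s v" using True adj[OF m(1,5)] adj[OF m(6,2)] d by auto
    hence P: "is_path V E [u,r,s,v]" using Ers d m by (intro pathI) auto
    show ?thesis unfolding PC_def
      by (rule exI[of _ "[u,r,s,v]"], rule exI[of _ "[x,y]"]) (use P Q eQ d V in auto)
  next
    case False
    have "\<sigma> s \<noteq> u"
    proof
      assume a: "\<sigma> s = u"
      show False
      proof (cases "\<sigma> r = u")
        case True thus False using sinj[OF m(5,6)] a d by simp
      next
        case False thus False using \<open>\<not> (\<sigma> r \<noteq> u \<and> \<sigma> s \<noteq> v)\<close> a d by simp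
      qed
    qed
    have "\<sigma> r \<noteq> v"
    proof
      assume a: "\<sigma> r = v"
      show False
      proof (cases "\<sigma> s = v")
        case True thus False using sinj[OF m(5,6)] a d by simp
      next
        case False thus False using \<open>\<not> (\<sigma> r \<noteq> u \<and> \<sigma> s \<noteq> v)\<close> a d by simp
      qed
    qed
    have "s \<noteq> \<sigma> u" proof assume "s = \<sigma> u" hence "\<sigma> s = u" using s3[OF m(1)] by simp
      thus False using \<open>\<sigma> s \<noteq> u\<close> by simp qed
    hence "E u s" "E r v" using \<open>\<sigma> r \<noteq> v\<close> adj[OF m(1,6)] adj[OF m(5,2)] d by auto
    hence P: "is_path V E [u,s,r,v]" using Ers d m by (intro pathI) auto
    show ?thesis unfolding PC_def
      by (rule exI[of _ "[u,s,r,v]"], rule exI[of _ "[x,y]"]) (use P Q eQ d V in auto)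
  qed
qed


lemma sinj_iff: "a \<in> V \<Longrightarrow> b \<in> V \<Longrightarrow> (\<sigma> a = \<sigma> b) = (a = b)"
  using sinj by blast

lemma sflip': "a \<in> V \<Longrightarrow> b = \<sigma> a \<Longrightarrow> \<sigma> b = a"
  using s3 by simp

lemma p2c: "P2CW V E V"
  unfolding P2CW_def
proof (intro ballI impI)
  fix u v x y assume m: "u \<in> V" "v \<in> V" "x \<in> V" "y \<in> V" and d4: "distinct [u,v,x,y]"
  obtain r s where rs: "r \<noteq> s" "V - {u,v,x,y} = {r,s}" using two_left[OF d4 m] by blast
  have mr: "r \<in> V" "s \<in> V" using rs by auto
  have d: "distinct [u,v,x,y,r,s]" using rs d4 by auto
  have V: "V = {u,v,x,y,r,s}" using rs m by auto
  show "PC V E V u v x y"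
  proof (cases "\<sigma> r = s")
    case True
    have ss: "\<sigma> s = r" using sflip'[OF mr(1) True[symmetric]] .
    have "r \<noteq> \<sigma> u" proof assume "r = \<sigma> u" hence "\<sigma> r = u" using sflip'[OF m(1)] by simp
      thus False using True d by simp qed
    moreover have "s \<noteq> \<sigma> x" proof assume "s = \<sigma> x" hence "\<sigma> s = x" using sflip'[OF m(3)] by simp
      thus False using ss d by simp qed
    ultimately have "E u r" "E r v" "E x s" "E s y"
      using adj[OF m(1) mr(1)] adj[OF mr(1) m(2)] adj[OF m(3) mr(2)] adj[OF mr(2) m(4)] d True ss by auto
    hence P: "is_path V E [u,r,v]" "is_path V E [x,s,y]" using d m mr by (auto intro!: pathI)
    have eQ: "edge_in V [x,s,y]" using m mr by (intro edge_in_sub) auto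
    show ?thesis unfolding PC_def
      by (rule exI[of _ "[u,r,v]"], rule exI[of _ "[x,s,y]"]) (use P eQ d V in auto)
  next
    case False
    show ?thesis
    proof (cases "y = \<sigma> x")
      case False
      thus ?thesis using case_xy[OF d m mr V \<open>\<sigma> r \<noteq> s\<close>] by blast
    next
      case yx: True
      show ?thesis
      proof (cases "v = \<sigma> u")
        case False
        have "distinct [x,y,u,v,r,s]" using d by auto
        moreover have "V = {x,y,u,v,r,s}" using V by auto
        ultimately have "PC V E V x y u v"
          using case_xy[of x y u v r s] m mr \<open>\<sigma> r \<noteq> s\<close> False by blast
        thus ?thesis by (rule PC_swap)
      next
        case vu: True
        have "\<sigma> r \<in> V" using s1 mr by auto
        moreover have "\<sigma> r \<noteq> u" proof assume "\<sigma> r = u" hence "\<sigma> u = r" using sflip'[OF mr(1)] by simp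
          thus False using vu d by simp qed
        moreover have "\<sigma> r \<noteq> x" proof assume "\<sigma> r = x" hence "\<sigma> x = r" using sflip'[OF mr(1)] by simp
          thus False using yx d by simp qed
        moreover have "\<sigma> r \<noteq> v" using vu sinj_iff[OF mr(1) m(1)] d by auto
        moreover have "\<sigma> r \<noteq> y" using yx sinj_iff[OF mr(1) m(3)] d by auto
        moreover have "\<sigma> r \<noteq> r" using s2 mr by simp
        ultimately show ?thesis using V \<open>\<sigma> r \<noteq> s\<close> by auto
      qed
    qed
  qed
qed


lemma neq_s: "a \<in> V \<Longrightarrow> b \<in> V \<Longrightarrow> b \<noteq> \<sigma> a \<Longrightarrow> \<sigma> b \<noteq> a"
proof
  assume "a \<in> V" "b \<in> V" "b \<noteq> \<sigma> a" "\<sigma> b = a"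
  hence "\<sigma> (\<sigma> b) = \<sigma> a" by simp
  thus False using s3 \<open>b \<in> V\<close> \<open>b \<noteq> \<sigma> a\<close> by simp
qed

lemma six_eq:
  assumes "distinct [a1,a2,a3,a4,a5,a6]" "{a1,a2,a3,a4,a5,a6} \<subseteq> V"
  shows "{a1,a2,a3,a4,a5,a6} = V"
proof -
  have "card {a1,a2,a3,a4,a5,a6} = 6" using assms(1) by simp
  thus ?thesis using card_subset_eq[OF fin assms(2)] c6 by simp
qed

lemma hc: "HCW V E V"
  unfolding HCW_def
proof (intro ballI impI)
  fix a b assume ab: "a \<in> V" "b \<in> V" "a \<noteq> b"
  have sa: "\<sigma> a \<in> V" "\<sigma> b \<in> V" using s1 ab by auto
  have ssa: "\<sigma> (\<sigma> a) = a" "\<sigma> (\<sigma> b) = b" using s3 ab by auto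
  have goal: "\<exists>P. is_path V E P \<and> hd P = a \<and> last P = b \<and> set P = V \<and> edge_in V P"
    if P: "is_path V E P" "hd P = a" "last P = b" "set P = V" for P
  proof -
    have "P \<noteq> []" using P by (simp add: is_path_iff)
    hence "2 \<le> length P" using len2[of P] P ab by auto
    hence "edge_in V P" using edge_in_sub[of P V] P(4) by simp
    thus ?thesis using P by blast
  qed
  show "\<exists>P. is_path V E P \<and> hd P = a \<and> last P = b \<and> set P = V \<and> edge_in V P"
  proof (cases "b = \<sigma> a")
    case True
    have "card (V - {a,b}) = 4" using ab fin c6 by (simp add: card_Diff_subset)
    hence "V - {a,b} \<noteq> {}" by (intro notI) simp
    then obtain c where c: "c \<in> V" "c \<noteq> a" "c \<noteq> b" by blast
    have sc: "\<sigma> c \<in> V" "\<sigma> (\<sigma> c) = c" "\<sigma> c \<noteq> c" using s1 s2 s3 c by auto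
    have "card (V - {a,b,c,\<sigma> c}) \<ge> 2"
    proof -
      have "card {a,b,c,\<sigma> c} \<le> 4" using card_length[of "[a,b,c,\<sigma> c]"] by simp
      moreover have "card (V - {a,b,c,\<sigma> c}) \<ge> card V - card {a,b,c,\<sigma> c}" by (rule diff_card_le_card_Diff) simp
      ultimately show ?thesis using c6 by simp
    qed
    hence "V - {a,b,c,\<sigma> c} \<noteq> {}" by (intro notI) simp
    then obtain d where d: "d \<in> V" "d \<notin> {a,b,c,\<sigma> c}" by blast
    have sd: "\<sigma> d \<in> V" "\<sigma> (\<sigma> d) = d" "\<sigma> d \<noteq> d" using s1 s2 s3 d by auto
    have n1: "\<sigma> c \<noteq> a" using neq_s[OF ab(1) c(1)] c True by auto
    have n2: "\<sigma> c \<noteq> b" using True sinj_iff[OF c(1) ab(1)] c by auto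
    have n3: "\<sigma> d \<noteq> a" using neq_s[OF ab(1) d(1)] d True by auto
    have n4: "\<sigma> d \<noteq> b" using True sinj_iff[OF d(1) ab(1)] d by auto
    have n5: "\<sigma> d \<noteq> c" using neq_s[OF c(1) d(1)] d by auto
    have n6: "\<sigma> d \<noteq> \<sigma> c" using sinj_iff[OF d(1) c(1)] d by auto
    have dist: "distinct [a,c,d,\<sigma> c,\<sigma> d,b]" using n1 n2 n3 n4 n5 n6 c d sc sd ab by auto
    have Vs: "{a,c,d,\<sigma> c,\<sigma> d,b} = V" using six_eq[OF dist] ab c d sc sd by auto
    have "E a c" "E c d" "E d (\<sigma> c)" "E (\<sigma> c) (\<sigma> d)" "E (\<sigma> d) b"
      using adj[OF ab(1) c(1)] adj[OF c(1) d(1)] adj[OF d(1) sc(1)] adj[OF sc(1) sd(1)] adj[OF sd(1) ab(2)]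
        dist True sc sd d by auto
    hence "is_path V E [a,c,d,\<sigma> c,\<sigma> d,b]" using dist ab c d sc sd by (auto intro!: pathI)
    thus ?thesis by (rule goal) (use Vs in auto)
  next
    case False
    have n0: "\<sigma> b \<noteq> a" using neq_s[OF ab(1,2) False] .
    have d4: "distinct [a,b,\<sigma> a,\<sigma> b]" using False n0 ab s2[OF ab(1)] s2[OF ab(2)] sinj_iff[OF ab(1,2)] by auto
    obtain c d where cd: "c \<noteq> d" "V - {a,b,\<sigma> a,\<sigma> b} = {c,d}" using two_left[OF d4 ab(1,2) sa] by blast
    have mc: "c \<in> V" "d \<in> V" "c \<notin> {a,b,\<sigma> a,\<sigma> b}" "d \<notin> {a,b,\<sigma> a,\<sigma> b}" using cd by auto
    have sc: "\<sigma> c \<in> V" "\<sigma> c \<noteq> c" using s1 s2 mc by auto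
    have "\<sigma> c \<noteq> a" using neq_s[OF ab(1) mc(1)] mc by auto
    moreover have "\<sigma> c \<noteq> b" using neq_s[OF ab(2) mc(1)] mc by auto
    moreover have "\<sigma> c \<noteq> \<sigma> a" "\<sigma> c \<noteq> \<sigma> b" using sinj_iff[OF mc(1) ab(1)] sinj_iff[OF mc(1) ab(2)] mc by auto
    ultimately have "\<sigma> c \<notin> {a,b,\<sigma> a,\<sigma> b}" by auto
    hence scd: "\<sigma> c = d" using cd sc by auto
    have sdc: "\<sigma> d = c" using sflip'[OF mc(1) scd[symmetric]] .
    have dist: "distinct [a,\<sigma> b,c,\<sigma> a,d,b]" using d4 mc(3,4) cd(1) by (simp; argo)
    have Vs: "{a,\<sigma> b,c,\<sigma> a,d,b} = V" by (rule six_eq[OF dist]) (use ab mc sa in simp)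
    have "E a (\<sigma> b)" "E (\<sigma> b) c" "E c (\<sigma> a)" "E (\<sigma> a) d" "E d b"
      using adj[OF ab(1) sa(2)] adj[OF sa(2) mc(1)] adj[OF mc(1) sa(1)] adj[OF sa(1) mc(2)] adj[OF mc(2) ab(2)]
        dist scd sdc ssa sinj_iff[OF ab(1,2)] by auto
    hence "is_path V E [a,\<sigma> b,c,\<sigma> a,d,b]" using dist ab mc sa by (auto intro!: pathI)
    thus ?thesis by (rule goal) (use Vs in auto)
  qed
qed

lemma good: "Good V E V" using hc p2c by (simp add: Good_def)

end

definition jv :: "'a set \<Rightarrow> nat \<Rightarrow> 'a set set" where "jv X k = {S. S \<subseteq> X \<and> card S = k}"
definition jadj :: "'a set \<Rightarrow> 'a set \<Rightarrow> bool" where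
  "jadj S T \<longleftrightarrow> card S = card T \<and> card (S \<inter> T) + 1 = card S"

lemma jadj_sym: "jadj S T \<Longrightarrow> jadj T S"
  unfolding jadj_def by (simp add: Int_commute)

lemma choose_ge: "0 < k \<Longrightarrow> k < m \<Longrightarrow> m \<le> m choose k"
proof (induction m arbitrary: k)
  case 0 thus ?case by simp
next
  case (Suc m)
  then obtain k' where k: "k = Suc k'" by (cases k) auto
  show ?case
  proof (cases "k' = 0")
    case True thus ?thesis using k by simp
  next
    case False
    have "m \<le> m choose k'" using Suc.IH[of k'] False Suc.prems k by simp
    moreover have "0 < m choose Suc k'" using Suc.prems k by simp
    moreover have "Suc m choose k = (m choose k') + (m choose Suc k')" using k by simp
    ultimately show ?thesis by linarith
  qed
qed

lemma card_jv: "finite X \<Longrightarrow> card (jv X k) = card X choose k"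
  unfolding jv_def by (rule n_subsets)

lemma finite_jv: "finite X \<Longrightarrow> finite (jv X k)"
  unfolding jv_def by (rule finite_subset[of _ "Pow X"]) auto

lemma card_jv_ge: "finite X \<Longrightarrow> 0 < k \<Longrightarrow> k < card X \<Longrightarrow> card X \<le> card (jv X k)"
  using card_jv choose_ge by metis

lemma jv_fin: "finite X \<Longrightarrow> S \<in> jv X k \<Longrightarrow> finite S"
  unfolding jv_def using finite_subset by blast

lemma complete1:
  assumes "finite X" "S \<in> jv X 1" "T \<in> jv X 1" "S \<noteq> T" shows "jadj S T"
proof -
  obtain a b where "S = {a}" "T = {b}" using assms(2,3) unfolding jv_def by (auto simp: card_1_singleton_iff)
  thus ?thesis using assms(4) unfolding jadj_def by auto
qed

lemma completeTop:
  assumes "finite X" "S \<in> jv X (card X - 1)" "T \<in> jv X (card X - 1)" "S \<noteq> T" shows "jadj S T"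
proof -
  have S: "S \<subseteq> X" "card S = card X - 1" and T: "T \<subseteq> X" "card T = card X - 1"
    using assms unfolding jv_def by auto
  have fS: "finite S" "finite T" using S T assms(1) finite_subset by auto
  have "card (S \<union> T) \<le> card X" using S T assms(1) by (intro card_mono) auto
  moreover have "card S + card T = card (S \<union> T) + card (S \<inter> T)" using card_Un_Int fS by blast
  moreover have "card (S \<inter> T) < card S"
  proof (rule psubset_card_mono)
    show "finite S" by fact
    show "S \<inter> T \<subset> S"
    proof
      show "S \<inter> T \<subseteq> S" by auto
      show "S \<inter> T \<noteq> S"
      proof
        assume "S \<inter> T = S"
        hence "S \<subseteq> T" by auto
        hence "S = T" using card_subset_eq fS S T by metis
        thus False using assms(4) by simp
      qed
    qed
  qed
  moreover have "card X \<ge> 1" using assms(4) S T by (cases "card X") (auto simp: card_0_eq[OF assms(1)])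
  ultimately show ?thesis unfolding jadj_def using S T by linarith
qed

lemma octa:
  assumes fin: "finite X" and c4: "card X = 4"
  shows "Good (jv X 2) jadj (jv X 2)"
proof -
  have fS: "\<And>S. S \<in> jv X 2 \<Longrightarrow> finite S" using jv_fin fin by blast
  interpret invol "jv X 2" jadj "\<lambda>S. X - S"
  proof
    show "finite (jv X 2)" using finite_jv fin by blast
    show "card (jv X 2) = 6" using card_jv[OF fin] c4 by (simp add: numeral_eq_Suc)
    fix S assume S: "S \<in> jv X 2"
    hence Ss: "S \<subseteq> X" "card S = 2" unfolding jv_def by auto
    show "X - S \<in> jv X 2" using Ss c4 fin unfolding jv_def by (auto simp: card_Diff_subset fS[OF S])
    show "X - S \<noteq> S" using Ss by (metis Diff_disjoint card.empty inf.idem zero_neq_numeral)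
    show "X - (X - S) = S" using Ss by auto
  next
    fix S T assume S: "S \<in> jv X 2" and T: "T \<in> jv X 2"
    hence Ss: "S \<subseteq> X" "card S = 2" "T \<subseteq> X" "card T = 2" unfolding jv_def by auto
    have f: "finite S" "finite T" using fS S T by auto
    have cu: "card (S \<union> T) \<le> 4" using c4 Ss fin card_mono[of X "S \<union> T"] by auto
    have ci: "card S + card T = card (S \<union> T) + card (S \<inter> T)" using card_Un_Int f by blast
    show "jadj S T \<longleftrightarrow> S \<noteq> T \<and> T \<noteq> X - S"
    proof
      assume j: "jadj S T"
      hence "card (S \<inter> T) = 1" unfolding jadj_def using Ss by simp
      moreover have "S \<noteq> T" using \<open>card (S \<inter> T) = 1\<close> Ss by auto
      moreover have "T \<noteq> X - S" using \<open>card (S \<inter> T) = 1\<close> by auto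
      ultimately show "S \<noteq> T \<and> T \<noteq> X - S" by simp
    next
      assume n: "S \<noteq> T \<and> T \<noteq> X - S"
      have "card (S \<inter> T) \<le> 2" using card_mono[OF f(1), of "S \<inter> T"] Ss by auto
      moreover have "card (S \<inter> T) \<noteq> 2"
      proof
        assume "card (S \<inter> T) = 2"
        hence "S \<inter> T = S" using card_subset_eq[OF f(1), of "S \<inter> T"] Ss by auto
        hence "S \<subseteq> T" by auto
        hence "S = T" using card_subset_eq[OF f(2)] Ss by metis
        thus False using n by simp
      qed
      moreover have "card (S \<inter> T) \<noteq> 0"
      proof
        assume "card (S \<inter> T) = 0"
        hence "S \<inter> T = {}" using f by auto
        hence "T \<subseteq> X - S" using Ss by auto
        moreover have "card (X - S) = 2" using Ss c4 by (simp add: card_Diff_subset f)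
        ultimately have "T = X - S" using card_subset_eq[of "X - S" T] fin Ss by auto
        thus False using n by simp
      qed
      ultimately show "jadj S T" unfolding jadj_def using Ss by auto
    qed
  qed
  show ?thesis by (rule good)
qed


definition matchc :: "'b set \<Rightarrow> 'b set \<Rightarrow> ('b \<Rightarrow> 'b \<Rightarrow> bool) \<Rightarrow> bool" where
  "matchc L R E \<longleftrightarrow> (\<forall>e1 e2 f1 f2. \<exists>p q p' q'. p \<in> L \<and> q \<in> L \<and> p \<noteq> q \<and> p \<notin> {e1,e2} \<and> q \<notin> {e1,e2}
     \<and> p' \<in> R \<and> q' \<in> R \<and> p' \<noteq> q' \<and> p' \<notin> {f1,f2} \<and> q' \<notin> {f1,f2} \<and> E p p' \<and> E q q')"

lemma matchc_flip:
  assumes "matchc R L E" "\<And>a b. E a b \<Longrightarrow> E b a" shows "matchc L R E"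
  unfolding matchc_def
proof (intro allI)
  fix e1 e2 f1 f2
  obtain p q p' q' where *: "p \<in> R" "q \<in> R" "p \<noteq> q" "p \<notin> {f1,f2}" "q \<notin> {f1,f2}"
     "p' \<in> L" "q' \<in> L" "p' \<noteq> q'" "p' \<notin> {e1,e2}" "q' \<notin> {e1,e2}" "E p p'" "E q q'"
    using assms(1) unfolding matchc_def by blast
  have "E p' p" "E q' q" using assms(2) *(11,12) by auto
  thus "\<exists>p q p' q'. p \<in> L \<and> q \<in> L \<and> p \<noteq> q \<and> p \<notin> {e1,e2} \<and> q \<notin> {e1,e2}
     \<and> p' \<in> R \<and> q' \<in> R \<and> p' \<noteq> q' \<and> p' \<notin> {f1,f2} \<and> q' \<notin> {f1,f2} \<and> E p p' \<and> E q q'"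
    using * by blast
qed

lemma two_elems:
  assumes "finite A" "card A \<ge> 2" obtains a b where "a \<in> A" "b \<in> A" "a \<noteq> b"
proof -
  obtain B where "B \<subseteq> A" "card B = 2" using obtain_subset_with_card_n assms(2) by metis
  then obtain a b where "B = {a,b}" "a \<noteq> b" using card_2_iff by metis
  thus ?thesis using that \<open>B \<subseteq> A\<close> by auto
qed

lemma card_minus2:
  assumes "finite A" shows "card A - 2 \<le> card (A - {a,b})"
proof -
  have "card A - card {a,b} \<le> card (A - {a,b})" by (rule diff_card_le_card_Diff) simp
  moreover have "card {a,b} \<le> 2" by (cases "a = b") auto
  ultimately show ?thesis by linarith
qed

lemma match_left:
  assumes fL: "finite L" and cL: "card L \<ge> 4" and fR: "finite R"
  and deg: "\<And>S. S \<in> L \<Longrightarrow> card {T\<in>R. E S T} \<ge> 3"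
  and inj: "\<And>S1 S2. S1 \<in> L \<Longrightarrow> S2 \<in> L \<Longrightarrow> {T\<in>R. E S1 T} = {T\<in>R. E S2 T} \<Longrightarrow> S1 = S2"
  shows "matchc L R E"
  unfolding matchc_def
proof (intro allI)
  fix e1 e2 f1 f2
  let ?N = "\<lambda>S. {T\<in>R. E S T}"
  have "card (L - {e1,e2}) \<ge> 2" using card_minus2[OF fL, of e1 e2] cL by linarith
  then obtain S1 S2 where S: "S1 \<in> L - {e1,e2}" "S2 \<in> L - {e1,e2}" "S1 \<noteq> S2"
    using two_elems[of "L - {e1,e2}"] fL by blast
  have fN: "\<And>S. finite (?N S)" using fR by auto
  have ne: "\<And>S. S \<in> L \<Longrightarrow> ?N S - {f1,f2} \<noteq> {}"
  proof
    fix S assume "S \<in> L" "?N S - {f1,f2} = {}"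
    hence "card (?N S) - 2 \<le> 0" using card_minus2[OF fN, of S f1 f2] by (simp only: card.empty)
    thus False using deg[OF \<open>S \<in> L\<close>] by linarith
  qed
  have sub3: "?N S = {T,f1,f2}" if "S \<in> L" "?N S \<subseteq> {T,f1,f2}" for S T
  proof (rule card_seteq)
    show "finite {T,f1,f2}" by simp
    show "?N S \<subseteq> {T,f1,f2}" by fact
    have "card {T,f1,f2} \<le> 3" using card_length[of "[T,f1,f2]"] by simp
    thus "card {T,f1,f2} \<le> card (?N S)" using deg[OF that(1)] by linarith
  qed
  show "\<exists>p q p' q'. p \<in> L \<and> q \<in> L \<and> p \<noteq> q \<and> p \<notin> {e1,e2} \<and> q \<notin> {e1,e2}
     \<and> p' \<in> R \<and> q' \<in> R \<and> p' \<noteq> q' \<and> p' \<notin> {f1,f2} \<and> q' \<notin> {f1,f2} \<and> E p p' \<and> E q q'"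
  proof (rule ccontr)
    assume nope: "\<not> ?thesis"
    obtain T2 where T2: "T2 \<in> ?N S2 - {f1,f2}" using ne S by blast
    have A: "?N S1 \<subseteq> {T2,f1,f2}"
    proof
      fix T assume "T \<in> ?N S1"
      show "T \<in> {T2,f1,f2}"
      proof (rule ccontr)
        assume "T \<notin> {T2,f1,f2}"
        thus False using nope S T2 \<open>T \<in> ?N S1\<close> by blast
      qed
    qed
    obtain T1 where T1: "T1 \<in> ?N S1 - {f1,f2}" using ne S by blast
    have B: "?N S2 \<subseteq> {T1,f1,f2}"
    proof
      fix T assume "T \<in> ?N S2"
      show "T \<in> {T1,f1,f2}"
      proof (rule ccontr)
        assume "T \<notin> {T1,f1,f2}"
        thus False using nope S T1 \<open>T \<in> ?N S2\<close> by blast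
      qed
    qed
    have "T1 = T2" using A T1 by auto
    hence "?N S1 = ?N S2" using sub3[OF _ A] sub3[OF _ B] S by auto
    thus False using inj S by blast
  qed
qed


lemma jadj_insert:
  assumes "finite A" "finite B" "x \<notin> A" "x \<notin> B"
  shows "jadj (insert x A) (insert x B) = jadj A B"
proof -
  have "insert x A \<inter> insert x B = insert x (A \<inter> B)" by auto
  moreover have "x \<notin> A \<inter> B" using assms by auto
  ultimately show ?thesis unfolding jadj_def using assms by auto
qed

lemma card_del:
  assumes "finite S" "s \<in> S" shows "card (S - {s}) + 1 = card S"
proof -
  have "card S > 0" using assms card_gt_0_iff by blast
  thus ?thesis using assms by (simp add: card_Diff_singleton)
qed

lemma ins_del_inj:
  assumes "s \<in> S" "s' \<in> S" "x \<notin> S" "insert x (S - {s}) = insert x (S - {s'})" shows "s = s'"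
proof (rule ccontr)
  assume "s \<noteq> s'"
  hence "s' \<in> insert x (S - {s})" using assms(2) by simp
  hence "s' \<in> insert x (S - {s'})" by (subst assms(4)[symmetric])
  hence "s' = x" by simp
  thus False using assms by auto
qed

lemma ins_inj2:
  assumes "t \<notin> A" "insert t A = insert t' A" shows "t = t'"
proof -
  have "t \<in> insert t' A" using assms(2) by blast
  thus ?thesis using assms(1) by simp
qed

lemma johnson_split:
  assumes fin: "finite X" and xX: "x \<in> X" and n5: "card X \<ge> 5" and k2: "2 \<le> k" and kn: "k + 2 \<le> card X"
  and G0: "Good (jv (X - {x}) k) jadj (jv (X - {x}) k)"
  and G1: "Good (jv (X - {x}) (k - 1)) jadj (jv (X - {x}) (k - 1))"
  shows "Good (jv X k) jadj (jv X k)"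
proof -
  define X' where "X' = X - {x}"
  define V0 where "V0 = jv X' k"
  define V1 where "V1 = {S \<in> jv X k. x \<in> S}"
  have finX': "finite X'" and cX': "card X' = card X - 1" using fin xX unfolding X'_def by auto
  have fin0: "\<And>S. S \<in> V0 \<Longrightarrow> finite S" unfolding V0_def using jv_fin finX' by blast
  have fin1: "\<And>S. S \<in> V1 \<Longrightarrow> finite S" unfolding V1_def using jv_fin fin by blast
  have m0: "\<And>S. S \<in> V0 \<longleftrightarrow> S \<subseteq> X' \<and> card S = k" unfolding V0_def jv_def by simp
  have m1: "\<And>S. S \<in> V1 \<longleftrightarrow> S \<subseteq> X \<and> card S = k \<and> x \<in> S" unfolding V1_def jv_def by auto
  have U: "jv X k = V0 \<union> V1" unfolding V0_def V1_def jv_def X'_def by auto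
  have D: "V0 \<inter> V1 = {}" unfolding V0_def V1_def jv_def X'_def by auto
  have bij: "bij_betw (insert x) (jv X' (k - 1)) V1"
  proof (rule bij_betw_imageI)
    show "inj_on (insert x) (jv X' (k - 1))"
    proof (rule inj_onI)
      fix A B assume "A \<in> jv X' (k - 1)" "B \<in> jv X' (k - 1)" "insert x A = insert x B"
      moreover have "x \<notin> A" "x \<notin> B" using calculation unfolding jv_def X'_def by auto
      ultimately show "A = B" using insert_ident[of x A B] by simp
    qed
    show "insert x ` jv X' (k - 1) = V1"
    proof
      show "insert x ` jv X' (k - 1) \<subseteq> V1"
      proof
        fix T assume "T \<in> insert x ` jv X' (k - 1)"
        then obtain A where A: "A \<subseteq> X'" "card A = k - 1" "T = insert x A" unfolding jv_def by auto
        have "finite A" "x \<notin> A" using A finX' finite_subset unfolding X'_def by auto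
        thus "T \<in> V1" using A k2 xX unfolding m1 X'_def by auto
      qed
      show "V1 \<subseteq> insert x ` jv X' (k - 1)"
      proof
        fix T assume T: "T \<in> V1"
        hence "T - {x} \<in> jv X' (k - 1)" using fin1[OF T] unfolding m1 jv_def X'_def by auto
        moreover have "T = insert x (T - {x})" using T m1 by auto
        ultimately show "T \<in> insert x ` jv X' (k - 1)" by blast
      qed
    qed
  qed
  have G1': "Good V1 jadj V1"
  proof -
    have "Good V1 jadj (insert x ` jv X' (k - 1))"
    proof (rule Good_iso[OF _ bij])
      show "Good (jv X' (k - 1)) jadj (jv X' (k - 1))" using G1 unfolding X'_def .
      fix A B assume AB: "A \<in> jv X' (k - 1)" "B \<in> jv X' (k - 1)"
      have "finite A" "finite B" using jv_fin[OF finX'] AB by auto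
      moreover have "x \<notin> A" "x \<notin> B" using AB unfolding jv_def X'_def by auto
      ultimately show "jadj (insert x A) (insert x B) = jadj A B" by (rule jadj_insert)
    qed
    moreover have "insert x ` jv X' (k - 1) = V1" using bij by (simp add: bij_betw_def)
    ultimately show ?thesis by simp
  qed
  have adjc: "jadj S T \<longleftrightarrow> T - {x} \<subseteq> S" if S: "S \<in> V0" and T: "T \<in> V1" for S T
  proof -
    have Ss: "S \<subseteq> X'" "card S = k" "x \<notin> S" using S unfolding m0 X'_def by auto
    have Ts: "card T = k" "x \<in> T" "finite T" using T fin1 unfolding m1 by auto
    have ST: "S \<inter> T = S \<inter> (T - {x})" using Ss by auto
    have cT: "card (T - {x}) + 1 = k" using card_del[OF Ts(3,2)] Ts by simp
    have fT: "finite (T - {x})" using Ts by simp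
    show ?thesis
    proof
      assume "jadj S T"
      hence "card (S \<inter> (T - {x})) = card (T - {x})" unfolding jadj_def using ST cT Ss by simp
      hence "S \<inter> (T - {x}) = T - {x}" using card_subset_eq[OF fT, of "S \<inter> (T - {x})"] by auto
      thus "T - {x} \<subseteq> S" by auto
    next
      assume "T - {x} \<subseteq> S"
      hence "S \<inter> (T - {x}) = T - {x}" by auto
      thus "jadj S T" unfolding jadj_def using ST cT Ss Ts by simp
    qed
  qed
  have ins0: "insert x (S - {s}) \<in> V1" if "S \<in> V0" "s \<in> S" for S s
  proof -
    have "x \<notin> S - {s}" "finite (S - {s})" using that fin0 unfolding m0 X'_def by auto
    moreover have "card (S - {s}) + 1 = k" using card_del[OF fin0[OF that(1)] that(2)] that(1) m0 by simp
    ultimately show ?thesis using that xX unfolding m1 m0 X'_def by auto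
  qed
  have ins1: "insert t (T - {x}) \<in> V0" if "T \<in> V1" "t \<in> X - T" for T t
  proof -
    have "t \<notin> T - {x}" "finite (T - {x})" using that fin1 by auto
    moreover have "card (T - {x}) + 1 = k" using card_del[OF fin1[OF that(1)], of x] that(1) m1 by simp
    moreover have "t \<noteq> x" using that m1 by auto
    ultimately show ?thesis using that unfolding m1 m0 X'_def by auto
  qed
  have cXT: "card (X - T) + k = card X" if "T \<in> V1" for T
  proof -
    have T: "T \<subseteq> X" "card T = k" "finite T" using that fin1 m1 by auto
    have "card (X - T) = card X - card T" using card_Diff_subset[OF T(3,1)] .
    moreover have "card T \<le> card X" using card_mono[OF fin T(1)] .
    ultimately show ?thesis using T by linarith
  qed
  have deg0: "\<exists>w1 w2. w1 \<in> V1 \<and> w2 \<in> V1 \<and> w1 \<noteq> w2 \<and> jadj S w1 \<and> jadj S w2" if S: "S \<in> V0" for S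
  proof -
    obtain s1 s2 where s: "s1 \<in> S" "s2 \<in> S" "s1 \<noteq> s2" using two_elems[of S] fin0[OF S] S k2 unfolding m0 by auto
    have x: "x \<notin> S" using S unfolding m0 X'_def by auto
    have "insert x (S - {s1}) \<noteq> insert x (S - {s2})"
    proof
      assume eq: "insert x (S - {s1}) = insert x (S - {s2})"
      have "s2 \<in> insert x (S - {s1})" using s by simp
      hence "s2 \<in> insert x (S - {s2})" using eq by simp
      thus False using s x by auto
    qed
    moreover have "jadj S (insert x (S - {s1}))" "jadj S (insert x (S - {s2}))"
      using adjc[OF S ins0[OF S s(1)]] adjc[OF S ins0[OF S s(2)]] by auto
    ultimately show ?thesis using ins0[OF S] s by blast
  qed
  have deg1: "\<exists>a1 a2. a1 \<in> V0 \<and> a2 \<in> V0 \<and> a1 \<noteq> a2 \<and> jadj T a1 \<and> jadj T a2" if T: "T \<in> V1" for T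
  proof -
    have "card (X - T) \<ge> 2" using cXT[OF T] kn by linarith
    then obtain t1 t2 where t: "t1 \<in> X - T" "t2 \<in> X - T" "t1 \<noteq> t2" using two_elems[of "X - T"] fin by auto
    have "insert t1 (T - {x}) \<noteq> insert t2 (T - {x})"
    proof
      assume eq: "insert t1 (T - {x}) = insert t2 (T - {x})"
      have "t1 \<in> insert t1 (T - {x})" by simp
      hence "t1 \<in> insert t2 (T - {x})" using eq by simp
      thus False using t by auto
    qed
    moreover have "jadj T (insert t1 (T - {x}))" "jadj T (insert t2 (T - {x}))"
      using adjc[OF ins1[OF T t(1)] T] adjc[OF ins1[OF T t(2)] T] jadj_sym by auto
    ultimately show ?thesis using ins1[OF T] t by blast
  qed
  have finV0: "finite V0" "finite V1" unfolding V0_def V1_def using finite_jv[OF fin, of k] finite_jv[OF finX', of k] by auto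
  have cV0: "card V0 \<ge> 4" using card_jv_ge[OF finX', of k] cX' kn k2 n5 unfolding V0_def by linarith
  have cV1: "card V1 \<ge> 4"
  proof -
    have "card V1 = card (jv X' (k - 1))" using bij_betw_same_card[OF bij] by simp
    thus ?thesis using card_jv_ge[OF finX', of "k - 1"] cX' kn k2 n5 by linarith
  qed
  have match: "matchc V0 V1 jadj"
  proof (cases "k \<ge> 3")
    case True
    show ?thesis
    proof (rule match_left[OF finV0(1) cV0 finV0(2)])
      fix S assume S: "S \<in> V0"
      have x: "x \<notin> S" using S unfolding m0 X'_def by auto
      have "inj_on (\<lambda>s. insert x (S - {s})) S"
      proof (rule inj_onI)
        fix s s' assume "s \<in> S" "s' \<in> S" "insert x (S - {s}) = insert x (S - {s'})"
        thus "s = s'" using x ins_del_inj by metis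
      qed
      hence "card ((\<lambda>s. insert x (S - {s})) ` S) = k" using card_image S m0 by auto
      moreover have "(\<lambda>s. insert x (S - {s})) ` S \<subseteq> {T \<in> V1. jadj S T}"
        using ins0[OF S] adjc[OF S] by auto
      moreover have "card ((\<lambda>s. insert x (S - {s})) ` S) \<le> card {T \<in> V1. jadj S T}"
        by (rule card_mono) (use finV0 calculation in auto)
      ultimately show "card {T \<in> V1. jadj S T} \<ge> 3" using True by linarith
    next
      fix S1 S2 assume S: "S1 \<in> V0" "S2 \<in> V0" and N: "{T \<in> V1. jadj S1 T} = {T \<in> V1. jadj S2 T}"
      show "S1 = S2"
      proof (rule ccontr)
        assume ne: "S1 \<noteq> S2"
        have "\<not> S1 \<subseteq> S2"
        proof
          assume "S1 \<subseteq> S2"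
          hence "S1 = S2" using card_subset_eq[OF fin0[OF S(2)] \<open>S1 \<subseteq> S2\<close>] S m0 by simp
          thus False using ne by simp
        qed
        then obtain s where s: "s \<in> S1" "s \<notin> S2" by blast
        have "card (S1 - {s}) \<ge> 1" using card_del[OF fin0[OF S(1)] s(1)] S(1) m0 k2 by simp
        hence "S1 - {s} \<noteq> {}" by (intro notI) simp
        then obtain s' where s': "s' \<in> S1" "s' \<noteq> s" by blast
        let ?T = "insert x (S1 - {s'})"
        have "?T \<in> {T \<in> V1. jadj S1 T}" using ins0[OF S(1) s'(1)] adjc[OF S(1) ins0[OF S(1) s'(1)]] by auto
        hence "?T \<in> {T \<in> V1. jadj S2 T}" using N by simp
        hence "?T - {x} \<subseteq> S2" using adjc[OF S(2)] by auto
        moreover have "s \<in> ?T - {x}" using s s' S(1) m0 X'_def by auto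
        ultimately show False using s by auto
      qed
    qed
  next
    case False
    hence k: "k = 2" using k2 by simp
    have "matchc V1 V0 jadj"
    proof (rule match_left[OF finV0(2) cV1 finV0(1)])
      fix T assume T: "T \<in> V1"
      have "inj_on (\<lambda>t. insert t (T - {x})) (X - T)"
      proof (rule inj_onI)
        fix t t' assume "t \<in> X - T" "t' \<in> X - T" "insert t (T - {x}) = insert t' (T - {x})"
        thus "t = t'" using ins_inj2[of t "T - {x}" t'] by auto
      qed
      hence "card ((\<lambda>t. insert t (T - {x})) ` (X - T)) = card (X - T)" using card_image by blast
      moreover have "(\<lambda>t. insert t (T - {x})) ` (X - T) \<subseteq> {S \<in> V0. jadj T S}"
      proof
        fix S assume "S \<in> (\<lambda>t. insert t (T - {x})) ` (X - T)"
        then obtain t where t: "t \<in> X - T" "S = insert t (T - {x})" by blast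
        have "S \<in> V0" using ins1[OF T t(1)] t by simp
        moreover have "jadj S T" using adjc[OF \<open>S \<in> V0\<close> T] t by auto
        ultimately show "S \<in> {S \<in> V0. jadj T S}" using jadj_sym by auto
      qed
      moreover have "card (X - T) \<ge> 3" using cXT[OF T] k n5 by linarith
      moreover have "card ((\<lambda>t. insert t (T - {x})) ` (X - T)) \<le> card {S \<in> V0. jadj T S}"
        by (rule card_mono) (use finV0 calculation in auto)
      ultimately show "card {S \<in> V0. jadj T S} \<ge> 3" by linarith
    next
      fix T1 T2 assume T: "T1 \<in> V1" "T2 \<in> V1" and N: "{S \<in> V0. jadj T1 S} = {S \<in> V0. jadj T2 S}"
      show "T1 = T2"
      proof (rule ccontr)
        assume ne: "T1 \<noteq> T2"
        have "\<not> T2 \<subseteq> T1"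
        proof
          assume "T2 \<subseteq> T1"
          hence "T2 = T1" using card_subset_eq[OF fin1[OF T(1)] \<open>T2 \<subseteq> T1\<close>] T m1 by simp
          thus False using ne by simp
        qed
        then obtain z where z: "z \<in> T2" "z \<notin> T1" by blast
        have "card (X - T1) \<ge> 2" using cXT[OF T(1)] kn by linarith
        then obtain t1 t2 where t: "t1 \<in> X - T1" "t2 \<in> X - T1" "t1 \<noteq> t2" using two_elems[of "X - T1"] fin by auto
        have "\<exists>t. t \<in> X - T1 \<and> t \<noteq> z" using t by blast
        then obtain t where t': "t \<in> X - T1" "t \<noteq> z" by blast
        let ?S = "insert t (T1 - {x})"
        have "?S \<in> {S \<in> V0. jadj T1 S}" using ins1[OF T(1) t'(1)] adjc[OF ins1[OF T(1) t'(1)] T(1)] jadj_sym by auto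
        hence "?S \<in> {S \<in> V0. jadj T2 S}" using N by simp
        hence "T2 - {x} \<subseteq> ?S" using adjc[OF _ T(2)] jadj_sym by auto
        moreover have "z \<noteq> x" using z T m1 by auto
        ultimately show False using z t' by auto
      qed
    qed
    thus ?thesis using matchc_flip jadj_sym by blast
  qed
  have "Good (V0 \<union> V1) jadj V0"
  proof (rule glue_good[OF D _ jadj_sym])
    show "V1 \<subseteq> V1" by simp
    show "Good V0 jadj V0" using G0 unfolding V0_def X'_def .
    show "Good V1 jadj V1" by (rule G1')
    show "finite V0" by (rule finV0)
    show "3 \<le> card V0" using cV0 by simp
  qed (use deg0 deg1 match[unfolded matchc_def] in auto)
  hence "Good (jv X k) jadj V0" using U by simp
  thus ?thesis by (rule Good_monoW) (use U in auto)
qed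


theorem johnson_good:
  "finite X \<Longrightarrow> card X \<ge> 4 \<Longrightarrow> 1 \<le> k \<Longrightarrow> k + 1 \<le> card X \<Longrightarrow> Good (jv X k) jadj (jv X k)"
proof (induction "card X" arbitrary: X k rule: less_induct)
  case less
  note fin = less.prems(1)
  show ?case
  proof (cases "k = 1")
    case True
    thus ?thesis using complete_good[OF finite_jv[OF fin]] complete1[OF fin] by blast
  next
    case k1: False
    show ?thesis
    proof (cases "k = card X - 1")
      case True
      thus ?thesis using complete_good[OF finite_jv[OF fin]] completeTop[OF fin] by blast
    next
      case k2: False
      show ?thesis
      proof (cases "card X = 4")
        case True
        hence "k = 2" using k1 k2 less.prems by linarith
        thus ?thesis using octa[OF fin True] by simp
      next
        case False
        obtain x where x: "x \<in> X" using less.prems by (metis card.empty ex_in_conv not_numeral_le_zero)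
        have cX: "card (X - {x}) = card X - 1" using x fin by simp
        have lt: "card (X - {x}) < card X" using cX less.prems by linarith
        have "Good (jv (X - {x}) k) jadj (jv (X - {x}) k)"
          by (rule less.hyps[OF lt]) (use fin cX less.prems False k1 k2 in auto)
        moreover have "Good (jv (X - {x}) (k - 1)) jadj (jv (X - {x}) (k - 1))"
          by (rule less.hyps[OF lt]) (use fin cX less.prems False k1 k2 in auto)
        ultimately show ?thesis
          by (intro johnson_split[OF fin x]) (use less.prems False k1 k2 in auto)
      qed
    qed
  qed
qed

lemma QJ_adj_sym: "QJ_adj n A S T \<Longrightarrow> QJ_adj n A T S"
  unfolding QJ_adj_def by (auto simp: Int_commute)

lemma QJ_verts_jv: "QJ_verts n A = {S. \<exists>k\<in>A. S \<in> jv {1..n} k}"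
  unfolding QJ_verts_def jv_def by auto

lemma sub_with:
  assumes "finite T" "z \<in> T" "1 \<le> a" "a \<le> card T"
  obtains S where "S \<subseteq> T" "z \<in> S" "card S = a"
proof -
  have "a - 1 \<le> card (T - {z})" using assms by simp
  then obtain U where U: "U \<subseteq> T - {z}" "card U = a - 1" "finite U" using obtain_subset_with_card_n by metis
  have "z \<notin> U" using U by auto
  hence "card (insert z U) = a" using U assms(3) by simp
  moreover have "insert z U \<subseteq> T" using U assms(2) by auto
  ultimately show ?thesis using that[of "insert z U"] by simp
qed

lemma sup_without:
  assumes "finite X" "S \<subseteq> X" "z \<in> X - S" "card S \<le> b" "b < card X"
  obtains T where "S \<subseteq> T" "T \<subseteq> X" "z \<notin> T" "card T = b"
proof -
  have fS: "finite S" using assms finite_subset by blast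
  have "card (X - S - {z}) = card X - card S - 1" using assms fS by (simp add: card_Diff_subset)
  hence "b - card S \<le> card (X - S - {z})" using assms by linarith
  then obtain R where R: "R \<subseteq> X - S - {z}" "card R = b - card S" "finite R" using obtain_subset_with_card_n by metis
  have "S \<inter> R = {}" using R by auto
  hence "card (S \<union> R) = card S + card R" using card_Un_disjoint[OF fS R(3)] by simp
  hence "card (S \<union> R) = b" using R assms(4) by simp
  thus ?thesis using that R assms by auto
qed


lemma qj_step:
  assumes n4: "n \<ge> 4" and ab: "a < b" and a1: "1 \<le> a" and bn: "b + 1 \<le> n"
  and aA: "a \<in> A" and bA: "b \<in> A" and amin: "\<And>c. c \<in> A \<Longrightarrow> a \<le> c"
  and bmin: "\<And>c. c \<in> A \<Longrightarrow> c \<noteq> a \<Longrightarrow> b \<le> c"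
  and IH: "Good (QJ_verts n (A - {a})) (QJ_adj n (A - {a})) (jv {1..n} b)"
  shows "Good (QJ_verts n A) (QJ_adj n A) (jv {1..n} a)"
proof -
  define X where "X = {1..n::nat}"
  define A' where "A' = A - {a}"
  define V0 where "V0 = jv X a"
  define V1 where "V1 = QJ_verts n A'"
  define W where "W = jv X b"
  have finX: "finite X" and cX: "card X = n" unfolding X_def by auto
  have m0: "\<And>S. S \<in> V0 \<longleftrightarrow> S \<subseteq> X \<and> card S = a" unfolding V0_def jv_def by simp
  have mW: "\<And>S. S \<in> W \<longleftrightarrow> S \<subseteq> X \<and> card S = b" unfolding W_def jv_def by simp
  have m1: "\<And>S. S \<in> V1 \<longleftrightarrow> S \<subseteq> X \<and> card S \<in> A'" unfolding V1_def QJ_verts_def X_def by simp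
  have mA: "\<And>S. S \<in> QJ_verts n A \<longleftrightarrow> S \<subseteq> X \<and> card S \<in> A" unfolding QJ_verts_def X_def by simp
  have U: "QJ_verts n A = V0 \<union> V1" using aA by (auto simp: mA m0 m1 A'_def)
  have D: "V0 \<inter> V1 = {}" by (auto simp: m0 m1 A'_def)
  have WV1: "W \<subseteq> V1" using bA ab by (auto simp: mW m1 A'_def)
  have consab: "consec A a b" unfolding consec_def using aA bA ab bmin by fastforce
  have conseq: "consec A c d = consec A' c d" if "c \<in> A'" "d \<in> A'" for c d
  proof -
    have "a < c" using that amin unfolding A'_def by force
    thus ?thesis unfolding consec_def A'_def using that unfolding A'_def by auto
  qed
  have fin0: "\<And>S. S \<in> V0 \<Longrightarrow> finite S" "\<And>S. S \<in> W \<Longrightarrow> finite S"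
    unfolding m0 mW using finX finite_subset by auto
  have G1: "Good V1 (QJ_adj n A) W"
  proof (rule Good_cong)
    show "Good V1 (QJ_adj n A') W" using IH unfolding V1_def A'_def W_def X_def .
    fix S T assume ST: "S \<in> V1" "T \<in> V1"
    hence "S \<in> QJ_verts n A" "T \<in> QJ_verts n A" "S \<in> QJ_verts n A'" "T \<in> QJ_verts n A'"
      using U unfolding V1_def by auto
    moreover have "card S \<in> A'" "card T \<in> A'" using ST m1 by auto
    ultimately show "QJ_adj n A' S T = QJ_adj n A S T" unfolding QJ_adj_def using conseq by simp
  qed
  have G0: "Good V0 (QJ_adj n A) V0"
  proof (rule Good_cong)
    show "Good V0 jadj V0" unfolding V0_def
      by (rule johnson_good) (use finX cX n4 a1 ab bn in auto)
    fix S T assume ST: "S \<in> V0" "T \<in> V0"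
    hence "S \<in> QJ_verts n A" "T \<in> QJ_verts n A" "card S = a" "card T = a" using U m0 by auto
    thus "jadj S T = QJ_adj n A S T" unfolding QJ_adj_def jadj_def consec_def by auto
  qed
  have cross: "QJ_adj n A S T \<longleftrightarrow> S \<subseteq> T" "QJ_adj n A T S \<longleftrightarrow> S \<subseteq> T" if "S \<in> V0" "T \<in> W" for S T
  proof -
    have S: "S \<in> QJ_verts n A" "card S = a" using that U m0 by auto
    have T: "T \<in> QJ_verts n A" "card T = b" using that U WV1 mW by auto
    have "\<not> T \<subseteq> S"
    proof
      assume "T \<subseteq> S"
      hence "card T \<le> card S" using card_mono[OF fin0(1)[OF that(1)]] by blast
      thus False using S T ab by linarith
    qed
    thus "QJ_adj n A S T \<longleftrightarrow> S \<subseteq> T" "QJ_adj n A T S \<longleftrightarrow> S \<subseteq> T"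
      unfolding QJ_adj_def using S T ab consab by auto
  qed
  have cXS: "card (X - S) + card S = n" if "S \<subseteq> X" for S
  proof -
    have fS: "finite S" using that finX finite_subset by blast
    have "card (X - S) = card X - card S" using card_Diff_subset[OF fS that] .
    moreover have "card S \<le> card X" using card_mono[OF finX that] .
    ultimately show ?thesis using cX by linarith
  qed
  have deg0: "\<exists>w1 w2. w1 \<in> W \<and> w2 \<in> W \<and> w1 \<noteq> w2 \<and> QJ_adj n A S w1 \<and> QJ_adj n A S w2" if S: "S \<in> V0" for S
  proof -
    have Ss: "S \<subseteq> X" "card S = a" using S m0 by auto
    have "card (X - S) \<ge> 2" using cXS[OF Ss(1)] Ss bn ab by linarith
    then obtain z z' where z: "z \<in> X - S" "z' \<in> X - S" "z \<noteq> z'" using two_elems[of "X - S"] finX by auto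
    have cb: "card S \<le> b" "b < card X" using Ss ab bn cX by auto
    obtain T1 where T1: "S \<subseteq> T1" "T1 \<subseteq> X" "z \<notin> T1" "card T1 = b"
      using sup_without[OF finX Ss(1) z(1) cb] by blast
    have S': "insert z S \<subseteq> X" "z' \<in> X - insert z S" using z Ss by auto
    have "card (insert z S) = a + 1" using Ss z fin0(1)[OF S] by simp
    hence cb': "card (insert z S) \<le> b" using Ss ab by simp
    obtain T2 where T2: "insert z S \<subseteq> T2" "T2 \<subseteq> X" "card T2 = b"
      using sup_without[OF finX S' cb' cb(2)] by blast
    have "T1 \<in> W" "T2 \<in> W" "T1 \<noteq> T2" using T1 T2 mW by auto
    moreover have "QJ_adj n A S T1" "QJ_adj n A S T2" using cross(1)[OF S] T1 T2 \<open>T1 \<in> W\<close> \<open>T2 \<in> W\<close> by auto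
    ultimately show ?thesis by blast
  qed
  have deg1: "\<exists>a1 a2. a1 \<in> V0 \<and> a2 \<in> V0 \<and> a1 \<noteq> a2 \<and> QJ_adj n A T a1 \<and> QJ_adj n A T a2" if T: "T \<in> W" for T
  proof -
    have Ts: "T \<subseteq> X" "card T = b" "finite T" using T mW fin0(2) by auto
    have "T \<noteq> {}" using Ts ab by auto
    then obtain r where r: "r \<in> T" by blast
    obtain S1 where S1: "S1 \<subseteq> T" "r \<in> S1" "card S1 = a" using sub_with[OF Ts(3) r a1] Ts ab by auto
    have "a \<le> card (T - {r})" using Ts r ab by simp
    then obtain S2 where S2: "S2 \<subseteq> T - {r}" "card S2 = a" using obtain_subset_with_card_n by metis
    have "S1 \<in> V0" "S2 \<in> V0" "S1 \<noteq> S2" using S1 S2 Ts m0 by auto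
    moreover have "QJ_adj n A T S1" "QJ_adj n A T S2" using cross(2)[OF _ T] S1 S2 \<open>S1 \<in> V0\<close> \<open>S2 \<in> V0\<close> by auto
    ultimately show ?thesis by blast
  qed
  have finV: "finite V0" "finite W" unfolding V0_def W_def using finite_jv[OF finX] by auto
  have cV0: "card V0 \<ge> 4" using card_jv_ge[OF finX, of a] cX n4 a1 ab bn unfolding V0_def by linarith
  have cW: "card W \<ge> 4" using card_jv_ge[OF finX, of b] cX n4 a1 ab bn unfolding W_def by linarith
  have match: "matchc V0 W (QJ_adj n A)"
  proof (cases "b \<ge> 3")
    case True
    have "matchc W V0 (QJ_adj n A)"
    proof (rule match_left[OF finV(2) cW finV(1)])
      fix T assume T: "T \<in> W"
      have Ts: "T \<subseteq> X" "card T = b" "finite T" using T mW fin0(2) by auto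
      have "jv T a \<subseteq> {S \<in> V0. QJ_adj n A T S}"
      proof
        fix S assume "S \<in> jv T a"
        hence "S \<subseteq> T" "card S = a" unfolding jv_def by auto
        hence "S \<in> V0" using Ts m0 by auto
        thus "S \<in> {S \<in> V0. QJ_adj n A T S}" using cross(2)[OF _ T] \<open>S \<subseteq> T\<close> by auto
      qed
      hence "card (jv T a) \<le> card {S \<in> V0. QJ_adj n A T S}" using finV by (intro card_mono) auto
      moreover have "card (jv T a) \<ge> b" using card_jv_ge[OF Ts(3), of a] Ts a1 ab by simp
      ultimately show "card {S \<in> V0. QJ_adj n A T S} \<ge> 3" using True by linarith
    next
      fix T1 T2 assume T: "T1 \<in> W" "T2 \<in> W" and N: "{S \<in> V0. QJ_adj n A T1 S} = {S \<in> V0. QJ_adj n A T2 S}"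
      show "T1 = T2"
      proof (rule ccontr)
        assume ne: "T1 \<noteq> T2"
        have "\<not> T1 \<subseteq> T2"
        proof
          assume "T1 \<subseteq> T2"
          hence "T1 = T2" using card_subset_eq[OF fin0(2)[OF T(2)] \<open>T1 \<subseteq> T2\<close>] T mW by simp
          thus False using ne by simp
        qed
        then obtain z where z: "z \<in> T1" "z \<notin> T2" by blast
        obtain S where S: "S \<subseteq> T1" "z \<in> S" "card S = a"
          using sub_with[OF fin0(2)[OF T(1)] z(1) a1] T mW ab by auto
        have "S \<in> V0" using S T mW m0 by auto
        hence "S \<in> {S \<in> V0. QJ_adj n A T1 S}" using cross(2)[OF _ T(1)] S by auto
        hence "S \<in> {S \<in> V0. QJ_adj n A T2 S}" using N by simp
        hence "S \<subseteq> T2" using cross(2)[OF _ T(2)] by auto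
        thus False using S z by auto
      qed
    qed
    thus ?thesis using matchc_flip QJ_adj_sym by blast
  next
    case False
    hence b2: "b = 2" "a = 1" using ab a1 by auto
    show ?thesis
    proof (rule match_left[OF finV(1) cV0 finV(2)])
      fix S assume S: "S \<in> V0"
      have Ss: "S \<subseteq> X" "card S = a" "finite S" using S m0 fin0(1) by auto
      have "inj_on (\<lambda>t. insert t S) (X - S)"
      proof (rule inj_onI)
        fix t t' assume "t \<in> X - S" "t' \<in> X - S" "insert t S = insert t' S"
        thus "t = t'" using ins_inj2[of t S t'] by auto
      qed
      hence "card ((\<lambda>t. insert t S) ` (X - S)) = card (X - S)" using card_image by blast
      moreover have "(\<lambda>t. insert t S) ` (X - S) \<subseteq> {T \<in> W. QJ_adj n A S T}"
      proof
        fix T assume "T \<in> (\<lambda>t. insert t S) ` (X - S)"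
        then obtain t where t: "t \<in> X - S" "T = insert t S" by blast
        have "T \<in> W" using t Ss b2 mW by auto
        thus "T \<in> {T \<in> W. QJ_adj n A S T}" using cross(1)[OF S] t by auto
      qed
      hence "card ((\<lambda>t. insert t S) ` (X - S)) \<le> card {T \<in> W. QJ_adj n A S T}" using finV by (intro card_mono) auto
      moreover have "card (X - S) \<ge> 3" using cXS[OF Ss(1)] Ss b2 n4 by linarith
      ultimately show "card {T \<in> W. QJ_adj n A S T} \<ge> 3" by linarith
    next
      fix S1 S2 assume S: "S1 \<in> V0" "S2 \<in> V0" and N: "{T \<in> W. QJ_adj n A S1 T} = {T \<in> W. QJ_adj n A S2 T}"
      show "S1 = S2"
      proof (rule ccontr)
        assume ne: "S1 \<noteq> S2"
        have "\<not> S2 \<subseteq> S1"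
        proof
          assume "S2 \<subseteq> S1"
          hence "S2 = S1" using card_subset_eq[OF fin0(1)[OF S(1)] \<open>S2 \<subseteq> S1\<close>] S m0 by simp
          thus False using ne by simp
        qed
        then obtain z where z: "z \<in> S2" "z \<notin> S1" by blast
        have S1s: "S1 \<subseteq> X" "card S1 = a" using S m0 by auto
        have "card (X - S1) \<ge> 2" using cXS[OF S1s(1)] S1s b2 n4 by linarith
        then obtain t1 t2 where t: "t1 \<in> X - S1" "t2 \<in> X - S1" "t1 \<noteq> t2" using two_elems[of "X - S1"] finX by auto
        have "\<exists>t. t \<in> X - S1 \<and> t \<noteq> z" using t by blast
        then obtain t where t': "t \<in> X - S1" "t \<noteq> z" by blast
        have "insert t S1 \<in> W" using t' S1s b2 mW fin0(1)[OF S(1)] by auto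
        hence "insert t S1 \<in> {T \<in> W. QJ_adj n A S1 T}" using cross(1)[OF S(1)] by auto
        hence "insert t S1 \<in> {T \<in> W. QJ_adj n A S2 T}" using N by simp
        hence "S2 \<subseteq> insert t S1" using cross(1)[OF S(2)] by auto
        thus False using z t' by auto
      qed
    qed
  qed
  have "Good (V0 \<union> V1) (QJ_adj n A) V0"
  proof (rule glue_good[OF D WV1 QJ_adj_sym G0 G1 finV(1)])
    show "3 \<le> card V0" using cV0 by simp
  qed (use deg0 deg1 match[unfolded matchc_def] in auto)
  thus ?thesis using U unfolding V0_def X_def by simp
qed


theorem qj_good:
  "n \<ge> 4 \<Longrightarrow> A \<noteq> {} \<Longrightarrow> A \<subseteq> {1..n-1} \<Longrightarrow> Good (QJ_verts n A) (QJ_adj n A) (jv {1..n} (Min A))"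
proof (induction "card A" arbitrary: A rule: less_induct)
  case less
  have finA: "finite A" using less.prems(3) finite_subset by blast
  define a where "a = Min A"
  have aA: "a \<in> A" using finA less.prems(2) unfolding a_def by simp
  have amin: "\<And>c. c \<in> A \<Longrightarrow> a \<le> c" using finA unfolding a_def by simp
  have a1: "1 \<le> a" "a + 1 \<le> n" using aA less.prems by auto
  show ?case
  proof (cases "A = {a}")
    case True
    have V: "QJ_verts n A = jv {1..n} a" unfolding QJ_verts_def jv_def True by auto
    have "Good (jv {1..n} a) jadj (jv {1..n} a)" by (rule johnson_good) (use less.prems a1 in auto)
    hence "Good (jv {1..n} a) (QJ_adj n A) (jv {1..n} a)"
    proof (rule Good_cong)
      fix S T assume "S \<in> jv {1..n} a" "T \<in> jv {1..n} a"
      thus "jadj S T = QJ_adj n A S T" unfolding QJ_adj_def jadj_def consec_def V[symmetric] True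
        by (auto simp: jv_def)
    qed
    thus ?thesis using V unfolding a_def by simp
  next
    case False
    define A' where "A' = A - {a}"
    have A'ne: "A' \<noteq> {}" using False aA unfolding A'_def by auto
    have finA': "finite A'" using finA unfolding A'_def by simp
    define b where "b = Min A'"
    have bA: "b \<in> A'" using finA' A'ne unfolding b_def by simp
    have bmin: "\<And>c. c \<in> A \<Longrightarrow> c \<noteq> a \<Longrightarrow> b \<le> c" using finA' unfolding b_def A'_def by simp
    have ab: "a < b" using bA amin unfolding A'_def by force
    have bn: "b + 1 \<le> n" using bA less.prems unfolding A'_def by auto
    have "card A > 0" using finA aA card_gt_0_iff by blast
    hence "card A' < card A" using finA aA unfolding A'_def by simp
    hence IH: "Good (QJ_verts n A') (QJ_adj n A') (jv {1..n} b)"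
      using less.hyps[of A'] less.prems A'ne unfolding b_def A'_def by auto
    have "Good (QJ_verts n A) (QJ_adj n A) (jv {1..n} a)"
      by (rule qj_step[OF less.prems(1) ab a1(1) bn aA]) (use bA amin bmin IH in \<open>auto simp: A'_def\<close>)
    thus ?thesis unfolding a_def .
  qed
qed

theorem lemma8:
  fixes n :: nat and A :: "nat set"
  assumes "n \<ge> 4" and "A \<noteq> {}" and "A \<subseteq> {1..n-1}"
  shows "paired_2_coverable (QJ_verts n A) (QJ_adj n A)"
  using qj_good[OF assms] P2CW_imp unfolding Good_def by blast

end
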